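(* Let $d\geq 1$. For every nonzero $p\in P_{d,2}$, \[ \frac{\|p\|_\infty}{\|p\|_B}\;\geq\;\frac{\|\mathrm{Ch}_{d,2}\|_\infty}{\|\mathrm{Ch}_{d,2}\|_B}\;=\;\frac{1}{\sqrt{2^{d-1}}}. \] Moreover: \begin{itemize} \item when $d=1$, equality holds for every nonzero $p\in P_{1,2}$; \item when $d=2$, equality holds if and only if $p=\pm g^*(x_1^2+x_2^2)$ or $p=g^*(x_1^2-x_2^2)$ for some $g\in CO(2)$; \item when $d\geq 3$, equality holds if and only if $p=g^*\mathrm{Ch}_{d,2}$ for some $g\in CO(2)$. \end{itemize}
   Context: $P_{d,n}$ denotes the real vector space of homogeneous polynomials (forms) of degree $d$ in $n$ real variables. For $p\in P_{d,n}$, the uniform norm is $\|p\|_\infty=\max_{\|x\|=1}|p(x)|$, where $\|\cdot\|$ is the Euclidean norm on $\mathbb{R}^n$. Writing $p(x)=\sum_{|\alpha|=d}c_\alpha x^\alpha$ in the monomial basis, the Bombieri norm is \[ \|p\|_B=\Big(\sum_{|\alpha|=d}\binom{d}{\alpha}^{-1}|c_\alpha|^2\Big)^{1/2},\qquad \binom{d}{\alpha}=\frac{d!}{\alpha_1!\cdots\alpha_n!}. \] The conformal orthogonal group is $CO(n)=\mathbb{R}_{>0}\times O(n)$. It acts on $P_{d,n}$ by $(g^*p)(x)=s\,p(\rho^{-1}x)$ for $g=(s,\rho)$. The binary Chebyshev form of degree $d$ is \[ \mathrm{Ch}_{d,2}(x_1,x_2)=\frac{(x_1+ix_2)^d+(x_1-ix_2)^d}{2}=\sum_{k=0}^{\lfloor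 d/2\rfloor}\binom{d}{2k}(-1)^kx_1^{d-2k}x_2^{2k}. \] *)

theory Defs
  imports "HOL-Analysis.Analysis"
begin

text \<open>A binary form p of degree d in P_{d,2} is given by its coefficient vector
  c_0,...,c_d in the monomial basis: p(x) = sum_{k=0..d} c_k x1^(d-k) x2^k.
  Coefficients c k for k > d are ignored.\<close>

definition form_eval :: "nat \<Rightarrow> (nat \<Rightarrow> real) \<Rightarrow> real^2 \<Rightarrow> real" where
  "form_eval d c x = (\<Sum>k\<le>d. c k * (x$1)^(d-k) * (x$2)^k)"

definition nonzero_form :: "nat \<Rightarrow> (nat \<Rightarrow> real) \<Rightarrow> bool" where
  "nonzero_form d c \<longleftrightarrow> (\<exists>k\<le>d. c k \<noteq> 0)"

definition uniform_norm :: "(real^2 \<Rightarrow> real) \<Rightarrow> real" where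
  "uniform_norm p = Sup {\<bar>p x\<bar> | x. norm x = 1}"

text \<open>Bombieri norm; for alpha = (d-k,k) the multinomial coefficient is d choose k.\<close>
definition bombieri_norm :: "nat \<Rightarrow> (nat \<Rightarrow> real) \<Rightarrow> real" where
  "bombieri_norm d c = sqrt (\<Sum>k\<le>d. (c k)^2 / real (d choose k))"

definition cheb_coeff :: "nat \<Rightarrow> nat \<Rightarrow> real" where
  "cheb_coeff d k = (if even k then real (d choose k) * (-1)^(k div 2) else 0)"

definition co_action :: "real \<Rightarrow> (real^2 \<Rightarrow> real^2) \<Rightarrow> (real^2 \<Rightarrow> real) \<Rightarrow> real^2 \<Rightarrow> real" where
  "co_action s \<rho> p = (\<lambda>x. s * p (inv \<rho> x))"

definition in_CO2 :: "real \<Rightarrow> (real^2 \<Rightarrow> real^2) \<Rightarrow> bool" where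
  "in_CO2 s \<rho> \<longleftrightarrow> s > 0 \<and> orthogonal_transformation \<rho>"

definition ratio :: "nat \<Rightarrow> (nat \<Rightarrow> real) \<Rightarrow> real" where
  "ratio d c = uniform_norm (form_eval d c) / bombieri_norm d c"

end

theory Submission
  imports Defs "HOL-Computational_Algebra.Polynomial"
begin

lemma norm2: "norm (x::real^2) = sqrt ((x$1)^2 + (x$2)^2)"
  by (simp add: norm_vec_def L2_set_def sum_2)

lemma vec_eq2: "(x::real^2) = vector [x$1, x$2]"
  by (simp add: vec_eq_iff forall_2)

lemma polyfun_eq_coeffs_except:
  fixes c e :: "nat \<Rightarrow> complex"
  assumes "\<And>x. x \<noteq> zz \<Longrightarrow> (\<Sum>i\<le>n. c i * x^i) = (\<Sum>i\<le>n. e i * x^i)"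
  shows "\<forall>i\<le>n. c i = e i"
proof -
  define p where "p = (\<Sum>i\<le>n. monom (c i - e i) i)"
  have ev: "poly p x = (\<Sum>i\<le>n. c i * x^i) - (\<Sum>i\<le>n. e i * x^i)" for x
    by (simp add: p_def poly_sum poly_monom sum_subtractf algebra_simps)
  have "p = 0"
  proof (rule ccontr)
    assume "p \<noteq> 0"
    hence "finite {x. poly p x = 0}" by (rule poly_roots_finite)
    moreover have "UNIV - {zz} \<subseteq> {x. poly p x = 0}" using assms ev by auto
    ultimately have "finite (UNIV - {zz} :: complex set)" by (rule rev_finite_subset)
    hence "finite (UNIV :: complex set)" by simp
    thus False by (simp add: infinite_UNIV_char_0)
  qed
  have "coeff p i = (if i \<le> n then c i - e i else 0)" for i
    by (simp add: p_def coeff_sum coeff_monom)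
  with \<open>p = 0\<close> show ?thesis by (metis coeff_0 eq_iff_diff_eq_0)
qed

lemma poly_le_sum:
  fixes p :: "complex poly"
  assumes "degree p \<le> n"
  shows "poly p x = (\<Sum>i\<le>n. coeff p i * x^i)"
proof -
  have "poly p x = poly (\<Sum>i\<le>n. monom (coeff p i) i) x"
    using poly_as_sum_of_monoms'[OF assms] by simp
  also have "\<dots> = (\<Sum>i\<le>n. coeff p i * x^i)" by (simp add: poly_sum poly_monom)
  finally show ?thesis .
qed

lemma form_coeff_unique:
  assumes "\<And>x. form_eval d c x = form_eval d c' x"
  shows "\<forall>k\<le>d. c k = c' k"
proof -
  have "(\<Sum>k\<le>d. c k * t^k) = (\<Sum>k\<le>d. c' k * t^k)" for t :: real
    using assms[of "vector [1, t]"] by (simp add: form_eval_def)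
  thus ?thesis using polyfun_eq_coeffs[where 'a=real] by blast
qed

definition Hf :: "nat \<Rightarrow> (nat \<Rightarrow> complex) \<Rightarrow> (nat \<Rightarrow> complex) \<Rightarrow> complex" where
  "Hf d u v = (\<Sum>k\<le>d. u k * cnj (v k) / of_nat (d choose k))"

definition pV :: "nat \<Rightarrow> nat \<Rightarrow> complex poly" where
  "pV d j = [:1, \<i>:]^j * [:1, -\<i>:]^(d-j)"

definition vc :: "nat \<Rightarrow> nat \<Rightarrow> nat \<Rightarrow> complex" where
  "vc d j k = coeff (pV d j) k"

lemma deg_pV: "j \<le> d \<Longrightarrow> degree (pV d j) \<le> d"
proof -
  assume j: "j \<le> d"
  have "degree (pV d j) \<le> degree ([:1, \<i>:]^j) + degree ([:1, -\<i>:]^(d-j))"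
    unfolding pV_def by (rule degree_mult_le)
  also have "\<dots> \<le> j * 1 + (d - j) * 1"
    by (intro add_mono order.trans[OF degree_power_le]) auto
  finally show ?thesis using j by simp
qed

lemma EV: "j \<le> d \<Longrightarrow> (\<Sum>k\<le>d. vc d j k * y^k) = (1 + \<i>*y)^j * (1 - \<i>*y)^(d-j)"
  unfolding vc_def
  by (subst poly_le_sum[OF deg_pV, symmetric]) (auto simp: pV_def algebra_simps)

lemma H_lin: "Hf d (\<lambda>k. of_nat (d choose k) * a^(d-k) * b^k) (\<lambda>k. of_nat (d choose k) * c^(d-k) * e^k)
   = (a * cnj c + b * cnj e)^d"
proof -
  have "(a * cnj c + b * cnj e)^d = (b * cnj e + a * cnj c)^d" by (simp add: add.commute)
  also have "\<dots> = (\<Sum>k\<le>d. of_nat (d choose k) * (b * cnj e)^k * (a * cnj c)^(d-k))"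
    by (simp add: binomial_ring atLeast0AtMost)
  also have "\<dots> = Hf d (\<lambda>k. of_nat (d choose k) * a^(d-k) * b^k) (\<lambda>k. of_nat (d choose k) * c^(d-k) * e^k)"
    unfolding Hf_def
    by (intro sum.cong refl) (simp add: power_mult_distrib field_simps)
  finally show ?thesis by simp
qed

lemma H_sesq: "Hf d (\<lambda>k. \<Sum>j\<le>n. a j * u j k) (\<lambda>k. \<Sum>l\<le>m. b l * v l k)
   = (\<Sum>j\<le>n. \<Sum>l\<le>m. a j * cnj (b l) * Hf d (u j) (v l))"
proof -
  have "Hf d (\<lambda>k. \<Sum>j\<le>n. a j * u j k) (\<lambda>k. \<Sum>l\<le>m. b l * v l k)
     = (\<Sum>k\<le>d. \<Sum>j\<le>n. \<Sum>l\<le>m. a j * cnj (b l) * (u j k * cnj (v l k) / of_nat (d choose k)))"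
    unfolding Hf_def
  proof (intro sum.cong refl)
    fix k
    have "(\<Sum>j\<le>n. a j * u j k) * cnj (\<Sum>l\<le>m. b l * v l k) = (\<Sum>j\<le>n. a j * u j k) * (\<Sum>l\<le>m. cnj (b l) * cnj (v l k))"
      by (simp add: cnj_sum)
    also have "\<dots> = (\<Sum>j\<le>n. \<Sum>l\<le>m. (a j * u j k) * (cnj (b l) * cnj (v l k)))"
      by (rule sum_product)
    finally show "(\<Sum>j\<le>n. a j * u j k) * cnj (\<Sum>l\<le>m. b l * v l k) / of_nat (d choose k) =
      (\<Sum>j\<le>n. \<Sum>l\<le>m. a j * cnj (b l) * (u j k * cnj (v l k) / of_nat (d choose k)))"
      by (simp add: sum_divide_distrib mult_ac)
  qed
  also have "\<dots> = (\<Sum>j\<le>n. \<Sum>k\<le>d. \<Sum>l\<le>m. a j * cnj (b l) * (u j k * cnj (v l k) / of_nat (d choose k)))"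
    by (rule sum.swap)
  also have "\<dots> = (\<Sum>j\<le>n. \<Sum>l\<le>m. \<Sum>k\<le>d. a j * cnj (b l) * (u j k * cnj (v l k) / of_nat (d choose k)))"
    by (intro sum.cong refl sum.swap)
  also have "\<dots> = (\<Sum>j\<le>n. \<Sum>l\<le>m. a j * cnj (b l) * Hf d (u j) (v l))"
    unfolding Hf_def by (simp add: sum_distrib_left)
  finally show ?thesis .
qed

lemma lin_V: "k \<le> d \<Longrightarrow> of_nat (d choose k) * (s+t)^(d-k) * (\<i>*(s-t))^k
   = (\<Sum>j\<le>d. of_nat (d choose j) * s^j * t^(d-j) * vc d j k)"
proof -
  assume k: "k \<le> d"
  have h: "(\<Sum>k\<le>d. (of_nat (d choose k) * (s+t)^(d-k) * (\<i>*(s-t))^k) * y^k)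
     = (\<Sum>k\<le>d. (\<Sum>j\<le>d. of_nat (d choose j) * s^j * t^(d-j) * vc d j k) * y^k)" for y
  proof -
    have "(\<Sum>k\<le>d. (of_nat (d choose k) * (s+t)^(d-k) * (\<i>*(s-t))^k) * y^k)
        = (\<i>*(s-t)*y + (s+t))^d"
      by (simp add: binomial_ring atLeast0AtMost power_mult_distrib mult_ac)
    also have "\<dots> = (s*(1+\<i>*y) + t*(1-\<i>*y))^d" by (simp add: algebra_simps)
    also have "\<dots> = (\<Sum>j\<le>d. of_nat (d choose j) * (s*(1+\<i>*y))^j * (t*(1-\<i>*y))^(d-j))"
      by (simp add: binomial_ring atLeast0AtMost)
    also have "\<dots> = (\<Sum>j\<le>d. of_nat (d choose j) * s^j * t^(d-j) * (\<Sum>k\<le>d. vc d j k * y^k))"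
    proof (intro sum.cong refl)
      fix j assume "j \<in> {..d}"
      hence h: "(\<Sum>k\<le>d. vc d j k * y^k) = (1 + \<i>*y)^j * (1 - \<i>*y)^(d-j)" by (intro EV) auto
      thus "of_nat (d choose j) * (s*(1+\<i>*y))^j * (t*(1-\<i>*y))^(d-j) = of_nat (d choose j) * s^j * t^(d-j) * (\<Sum>k\<le>d. vc d j k * y^k)"
        unfolding h power_mult_distrib by (simp only: mult_ac)
    qed
    also have "\<dots> = (\<Sum>j\<le>d. \<Sum>k\<le>d. of_nat (d choose j) * s^j * t^(d-j) * vc d j k * y^k)"
      by (simp add: sum_distrib_left mult.assoc)
    also have "\<dots> = (\<Sum>k\<le>d. \<Sum>j\<le>d. of_nat (d choose j) * s^j * t^(d-j) * vc d j k * y^k)"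
      by (rule sum.swap)
    also have "\<dots> = (\<Sum>k\<le>d. (\<Sum>j\<le>d. of_nat (d choose j) * s^j * t^(d-j) * vc d j k) * y^k)"
      by (simp add: sum_distrib_right)
    finally show ?thesis .
  qed
  have all: "\<forall>y. (\<Sum>k\<le>d. (of_nat (d choose k) * (s+t)^(d-k) * (\<i>*(s-t))^k) * y^k)
     = (\<Sum>k\<le>d. (\<Sum>j\<le>d. of_nat (d choose j) * s^j * t^(d-j) * vc d j k) * y^k)"
    using h by (rule allI)
  from polyfun_eq_coeffs[THEN iffD1, OF all] k show ?thesis by simp
qed

lemma Hf_cong: "(\<And>k. k \<le> d \<Longrightarrow> u k = u' k) \<Longrightarrow> (\<And>k. k \<le> d \<Longrightarrow> v k = v' k) \<Longrightarrow> Hf d u v = Hf d u' v'"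
  unfolding Hf_def by (intro sum.cong) auto

lemma lin_V1: "k \<le> d \<Longrightarrow> of_nat (d choose k) * (s+1)^(d-k) * (\<i>*(s-1))^k
   = (\<Sum>j\<le>d. (of_nat (d choose j) * s^j * 1^(d-j)) * vc d j k)"
  using lin_V[of k d s 1] by simp

lemma HV_aux: "(\<Sum>j\<le>d. (of_nat (d choose j) * (\<Sum>l\<le>d. of_nat (d choose l) * Hf d (vc d j) (vc d l) * \<sigma>^l)) * s^j)
   = (\<Sum>j\<le>d. (2^d * of_nat (d choose j) * \<sigma>^j) * s^j)"
proof -
  define s' where "s' = cnj \<sigma>"
  have "Hf d (\<lambda>k. of_nat (d choose k) * (s+1)^(d-k) * (\<i>*(s-1))^k) (\<lambda>k. of_nat (d choose k) * (s'+1)^(d-k) * (\<i>*(s'-1))^k)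
     = ((s+1) * cnj (s'+1) + (\<i>*(s-1)) * cnj (\<i>*(s'-1)))^d" by (rule H_lin)
  also have "\<dots> = (2 * (s * \<sigma>) + 2)^d" by (simp add: s'_def algebra_simps)
  also have "\<dots> = (\<Sum>j\<le>d. (2^d * of_nat (d choose j) * \<sigma>^j) * s^j)"
    by (simp add: binomial_ring atLeast0AtMost power_mult_distrib mult_ac power_add[symmetric])
  finally have 1: "Hf d (\<lambda>k. of_nat (d choose k) * (s+1)^(d-k) * (\<i>*(s-1))^k) (\<lambda>k. of_nat (d choose k) * (s'+1)^(d-k) * (\<i>*(s'-1))^k) = (\<Sum>j\<le>d. (2^d * of_nat (d choose j) * \<sigma>^j) * s^j)" .
  have "Hf d (\<lambda>k. of_nat (d choose k) * (s+1)^(d-k) * (\<i>*(s-1))^k) (\<lambda>k. of_nat (d choose k) * (s'+1)^(d-k) * (\<i>*(s'-1))^k)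
     = Hf d (\<lambda>k. \<Sum>j\<le>d. (of_nat (d choose j) * s^j * 1^(d-j)) * vc d j k) (\<lambda>k. \<Sum>l\<le>d. (of_nat (d choose l) * s'^l * 1^(d-l)) * vc d l k)"
    by (intro Hf_cong lin_V1)
  also have "\<dots> = (\<Sum>j\<le>d. \<Sum>l\<le>d. (of_nat (d choose j) * s^j * 1^(d-j)) * cnj (of_nat (d choose l) * s'^l * 1^(d-l)) * Hf d (vc d j) (vc d l))"
    by (rule H_sesq)
  also have "\<dots> = (\<Sum>j\<le>d. (of_nat (d choose j) * (\<Sum>l\<le>d. of_nat (d choose l) * Hf d (vc d j) (vc d l) * \<sigma>^l)) * s^j)"
    by (simp add: s'_def sum_distrib_left sum_distrib_right mult_ac)
  finally show ?thesis using 1 by simp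
qed

lemma HV: assumes "j \<le> d" "l \<le> d"
  shows "Hf d (vc d j) (vc d l) = (if j = l then 2^d / of_nat (d choose j) else 0)"
proof -
  have A1: "\<forall>s. (\<Sum>j\<le>d. (of_nat (d choose j) * (\<Sum>l\<le>d. of_nat (d choose l) * Hf d (vc d j) (vc d l) * \<sigma>^l)) * s^j)
   = (\<Sum>j\<le>d. (2^d * of_nat (d choose j) * \<sigma>^j) * s^j)" for \<sigma>
    using HV_aux[of d \<sigma>] by (rule allI)
  have P: "\<forall>j\<le>d. of_nat (d choose j) * (\<Sum>l\<le>d. of_nat (d choose l) * Hf d (vc d j) (vc d l) * \<sigma>^l) = 2^d * of_nat (d choose j) * \<sigma>^j" for \<sigma>
    using polyfun_eq_coeffs[THEN iffD1, OF A1[of \<sigma>]] by simp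
  have "(\<Sum>l\<le>d. (of_nat (d choose l) * Hf d (vc d j) (vc d l)) * \<sigma>^l) = (\<Sum>l\<le>d. (if l = j then 2^d else 0) * \<sigma>^l)" for \<sigma>
  proof -
    have "(\<Sum>l\<le>d. (if l = j then 2^d else 0) * \<sigma>^l) = (\<Sum>l\<le>d. if l = j then 2^d*\<sigma>^l else (0::complex))"
      by (intro sum.cong) auto
    also have "\<dots> = 2^d * \<sigma>^j" using assms(1) by simp
    finally show ?thesis using P[of \<sigma>] assms(1) by simp
  qed
  hence "\<forall>\<sigma>. (\<Sum>l\<le>d. (of_nat (d choose l) * Hf d (vc d j) (vc d l)) * \<sigma>^l) = (\<Sum>l\<le>d. (if l = j then 2^d else 0) * \<sigma>^l)"
    by (rule allI)
  hence "\<forall>l\<le>d. of_nat (d choose l) * Hf d (vc d j) (vc d l) = (if l = j then 2^d else 0)"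
    by (rule polyfun_eq_coeffs[THEN iffD1])
  hence "of_nat (d choose l) * Hf d (vc d j) (vc d l) = (if l = j then 2^d else 0)" using assms(2) by blast
  moreover have "of_nat (d choose l) \<noteq> (0::complex)" using assms(2) by simp
  ultimately show ?thesis by (auto simp: field_simps)
qed

definition cf :: "(nat \<Rightarrow> real) \<Rightarrow> nat \<Rightarrow> complex" where
  "cf c k = complex_of_real (c k)"

definition pQ :: "nat \<Rightarrow> (nat \<Rightarrow> real) \<Rightarrow> complex poly" where
  "pQ d c = (\<Sum>k\<le>d. smult (cf c k) ([:1/2, 1/2:]^(d-k) * [:\<i>/2, -\<i>/2:]^k))"

definition ac :: "nat \<Rightarrow> (nat \<Rightarrow> real) \<Rightarrow> nat \<Rightarrow> complex" where
  "ac d c j = coeff (pQ d c) j"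

lemma deg_pQ: "degree (pQ d c) \<le> d"
  unfolding pQ_def
proof (intro degree_sum_le)
  fix k assume "k \<in> {..d}"
  have "degree (smult (cf c k) ([:1/2, 1/2:]^(d-k) * [:\<i>/2, -\<i>/2:]^k))
      \<le> degree ([:1/2::complex, 1/2:]^(d-k)) + degree ([:\<i>/2, -\<i>/2:]^k)"
    by (rule order.trans[OF degree_smult_le degree_mult_le])
  also have "\<dots> \<le> (d-k) * 1 + k * 1"
    by (intro add_mono order.trans[OF degree_power_le]) auto
  finally show "degree (smult (cf c k) ([:1/2, 1/2:]^(d-k) * [:\<i>/2, -\<i>/2:]^k)) \<le> d"
    using \<open>k \<in> {..d}\<close> by simp
qed simp

lemma poly_pQ: "poly (pQ d c) u = (\<Sum>k\<le>d. cf c k * ((u+1)/2)^(d-k) * (\<i>*(1-u)/2)^k)"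
  unfolding pQ_def poly_sum by (intro sum.cong refl) (simp add: field_simps)

lemma poly_pQ2: "poly (pQ d c) u = (\<Sum>j\<le>d. ac d c j * u^j)"
  unfolding ac_def by (rule poly_le_sum[OF deg_pQ])

lemma A4_point:
  assumes y: "y \<noteq> -\<i>"
  shows "(\<Sum>k\<le>d. cf c k * y^k) = (\<Sum>k\<le>d. (\<Sum>j\<le>d. ac d c j * vc d j k) * y^k)"
proof -
  define w where "w = 1 - \<i>*y"
  have w: "w \<noteq> 0"
  proof
    assume "w = 0"
    hence "\<i> * y = 1" by (simp add: w_def)
    hence "-\<i> * (\<i> * y) = -\<i>" by simp
    hence "y = -\<i>" by (simp add: mult.assoc[symmetric])
    with y show False by simp
  qed
  define u where "u = (1 + \<i>*y) / w"
  have u1: "(u+1)/2 = 1/w" using w by (simp add: u_def w_def field_simps)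
  have u2: "\<i>*(1-u)/2 = y/w" using w by (simp add: u_def w_def field_simps)
  have "(\<Sum>k\<le>d. (\<Sum>j\<le>d. ac d c j * vc d j k) * y^k) = (\<Sum>k\<le>d. \<Sum>j\<le>d. ac d c j * (vc d j k * y^k))"
    by (simp add: sum_distrib_right mult.assoc)
  also have "\<dots> = (\<Sum>j\<le>d. \<Sum>k\<le>d. ac d c j * (vc d j k * y^k))" by (rule sum.swap)
  also have "\<dots> = (\<Sum>j\<le>d. ac d c j * ((1 + \<i>*y)^j * (1 - \<i>*y)^(d-j)))"
    by (intro sum.cong refl) (simp add: sum_distrib_left[symmetric] EV)
  also have "\<dots> = (\<Sum>j\<le>d. w^d * (ac d c j * u^j))"
  proof (intro sum.cong refl)
    fix j assume "j \<in> {..d}"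
    hence "w^d = w^j * w^(d-j)" by (simp add: power_add[symmetric])
    thus "ac d c j * ((1 + \<i>*y)^j * (1 - \<i>*y)^(d-j)) = w^d * (ac d c j * u^j)"
      using w by (simp add: u_def w_def power_divide)
  qed
  also have "\<dots> = w^d * poly (pQ d c) u" by (simp add: poly_pQ2 sum_distrib_left)
  also have "\<dots> = (\<Sum>k\<le>d. w^d * (cf c k * (1/w)^(d-k) * (y/w)^k))"
    by (simp add: poly_pQ u1 u2 sum_distrib_left)
  also have "\<dots> = (\<Sum>k\<le>d. cf c k * y^k)"
  proof (intro sum.cong refl)
    fix k assume "k \<in> {..d}"
    hence "w^d = w^(d-k) * w^k" by (simp add: power_add[symmetric])
    thus "w^d * (cf c k * (1/w)^(d-k) * (y/w)^k) = cf c k * y^k"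
      using w by (simp add: power_divide field_simps)
  qed
  finally show ?thesis by simp
qed

lemma A4: "k \<le> d \<Longrightarrow> cf c k = (\<Sum>j\<le>d. ac d c j * vc d j k)"
  using polyfun_eq_coeffs_except[where zz="-\<i>" and n=d and c="cf c" and e="\<lambda>k. \<Sum>j\<le>d. ac d c j * vc d j k"] A4_point by blast

lemma H_lin1: "Hf d (\<lambda>k. \<Sum>j\<le>n. a j * u j k) v = (\<Sum>j\<le>n. a j * Hf d (u j) v)"
proof -
  have "Hf d (\<lambda>k. \<Sum>j\<le>n. a j * u j k) v = (\<Sum>k\<le>d. \<Sum>j\<le>n. a j * (u j k * cnj (v k) / of_nat (d choose k)))"
    unfolding Hf_def by (simp add: sum_distrib_right sum_distrib_left sum_divide_distrib mult_ac)
  also have "\<dots> = (\<Sum>j\<le>n. \<Sum>k\<le>d. a j * (u j k * cnj (v k) / of_nat (d choose k)))" by (rule sum.swap)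
  also have "\<dots> = (\<Sum>j\<le>n. a j * Hf d (u j) v)" unfolding Hf_def by (simp add: sum_distrib_left)
  finally show ?thesis .
qed

lemma V_unique:
  assumes "\<And>k. k \<le> d \<Longrightarrow> (\<Sum>j\<le>d. b j * vc d j k) = (\<Sum>j\<le>d. b' j * vc d j k)" and "l \<le> d"
  shows "b l = b' l"
proof -
  have ev: "Hf d (\<lambda>k. \<Sum>j\<le>d. b j * vc d j k) (vc d l) = b l * (2^d / of_nat (d choose l))" for b
  proof -
    have "Hf d (\<lambda>k. \<Sum>j\<le>d. b j * vc d j k) (vc d l) = (\<Sum>j\<le>d. b j * Hf d (vc d j) (vc d l))"
      by (rule H_lin1)
    also have "\<dots> = (\<Sum>j\<le>d. if j = l then b j * (2^d / of_nat (d choose l)) else 0)"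
      using assms(2) by (intro sum.cong refl) (simp add: HV)
    also have "\<dots> = b l * (2^d / of_nat (d choose l))" using assms(2) by simp
    finally show ?thesis .
  qed
  have "Hf d (\<lambda>k. \<Sum>j\<le>d. b j * vc d j k) (vc d l) = Hf d (\<lambda>k. \<Sum>j\<le>d. b' j * vc d j k) (vc d l)"
    by (intro Hf_cong) (auto simp: assms(1))
  hence "b l * (2^d / of_nat (d choose l)) = b' l * (2^d / of_nat (d choose l))" by (simp only: ev)
  moreover have "(2^d / of_nat (d choose l)) \<noteq> (0::complex)" using assms(2) by simp
  ultimately show ?thesis by simp
qed

lemma sum_rev_d: "(\<Sum>j\<le>d. g (d - j)) = (\<Sum>j\<le>(d::nat). (g j :: complex))"
  by (rule sum.reindex_bij_witness[where i="\<lambda>j. d - j" and j="\<lambda>j. d - j"]) auto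

lemma vc_cnj: assumes "j \<le> d" "k \<le> d" shows "cnj (vc d j k) = vc d (d-j) k"
proof -
  have h: "(\<Sum>k\<le>d. cnj (vc d j k) * y^k) = (\<Sum>k\<le>d. vc d (d-j) k * y^k)" for y
  proof -
    have "(\<Sum>k\<le>d. cnj (vc d j k) * y^k) = cnj (\<Sum>k\<le>d. vc d j k * (cnj y)^k)" by simp
    also have "\<dots> = cnj ((1 + \<i>*cnj y)^j * (1 - \<i>*cnj y)^(d-j))" using assms(1) by (simp only: EV)
    also have "\<dots> = (1 + \<i>*y)^(d-j) * (1 - \<i>*y)^(d-(d-j))" using assms(1) by simp
    also have "\<dots> = (\<Sum>k\<le>d. vc d (d-j) k * y^k)" by (rule EV[symmetric]) simp
    finally show ?thesis .
  qed
  have "\<forall>y. (\<Sum>k\<le>d. cnj (vc d j k) * y^k) = (\<Sum>k\<le>d. vc d (d-j) k * y^k)" using h by (rule allI)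
  from polyfun_eq_coeffs[THEN iffD1, OF this] assms(2) show ?thesis by simp
qed

lemma ac_sym: assumes "j \<le> d" shows "ac d c (d-j) = cnj (ac d c j)"
proof -
  have "(\<Sum>j\<le>d. ac d c j * vc d j k) = (\<Sum>j\<le>d. cnj (ac d c (d-j)) * vc d j k)" if k: "k \<le> d" for k
  proof -
    have "(\<Sum>j\<le>d. ac d c j * vc d j k) = cf c k" using A4[OF k] by simp
    also have "\<dots> = cnj (cf c k)" by (simp add: cf_def)
    also have "\<dots> = (\<Sum>j\<le>d. cnj (ac d c j) * vc d (d-j) k)"
      using A4[OF k] k by (simp add: vc_cnj)
    also have "\<dots> = (\<Sum>j\<le>d. cnj (ac d c (d-(d-j))) * vc d (d-j) k)"
      by (intro sum.cong refl) auto
    also have "\<dots> = (\<Sum>j\<le>d. cnj (ac d c (d-j)) * vc d j k)"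
      by (rule sum_rev_d[where g="\<lambda>j. cnj (ac d c (d-j)) * vc d j k"])
    finally show ?thesis .
  qed
  hence "ac d c (d-j) = cnj (ac d c (d-(d-j)))"
    by (rule V_unique) (use assms in simp_all)
  thus ?thesis using assms by simp
qed

lemma bomb_id: "(\<Sum>k\<le>d. (c k)^2 / real (d choose k)) = 2^d * (\<Sum>j\<le>d. (cmod (ac d c j))^2 / real (d choose j))"
proof -
  have "complex_of_real (\<Sum>k\<le>d. (c k)^2 / real (d choose k)) = Hf d (cf c) (cf c)"
    by (simp add: Hf_def cf_def power2_eq_square)
  also have "\<dots> = Hf d (\<lambda>k. \<Sum>j\<le>d. ac d c j * vc d j k) (\<lambda>k. \<Sum>l\<le>d. ac d c l * vc d l k)"
    by (intro Hf_cong A4)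
  also have "\<dots> = (\<Sum>j\<le>d. \<Sum>l\<le>d. ac d c j * cnj (ac d c l) * Hf d (vc d j) (vc d l))"
    by (rule H_sesq)
  also have "\<dots> = (\<Sum>j\<le>d. \<Sum>l\<le>d. if l = j then ac d c j * cnj (ac d c j) * (2^d / of_nat (d choose j)) else 0)"
    by (intro sum.cong refl) (auto simp: HV)
  also have "\<dots> = (\<Sum>j\<le>d. ac d c j * cnj (ac d c j) * (2^d / of_nat (d choose j)))"
    by (intro sum.cong refl) simp
  also have "\<dots> = complex_of_real (2^d * (\<Sum>j\<le>d. (cmod (ac d c j))^2 / real (d choose j)))"
    by (simp add: complex_norm_square[symmetric] sum_distrib_left mult_ac)
  finally show ?thesis using of_real_eq_iff by blast
qed

definition vx :: "real \<Rightarrow> real^2" where "vx t = vector [cos t, sin t]"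

lemma norm_vx: "norm (vx t) = 1" by (simp add: vx_def norm2)

lemma cis_cnj_mult: "cis t * cnj (cis t) = 1"
  by (simp add: cis_cnj cis_mult)

lemma trig_rep: "complex_of_real (form_eval d c (vx t)) = (\<Sum>j\<le>d. ac d c j * cis t ^ (2*j)) * cnj (cis t) ^ d"
proof -
  define z where "z = cis t"
  have zz: "z * cnj z = 1" by (simp add: z_def cis_cnj_mult)
  have c1: "(z^2 + 1)/2 = z * complex_of_real (cos t)"
  proof -
    have "complex_of_real (cos t) = (z + cnj z)/2" by (simp add: z_def cis.ctr complex_eq_iff)
    thus ?thesis using zz by (simp add: algebra_simps power2_eq_square)
  qed
  have c2: "\<i>*(1 - z^2)/2 = z * complex_of_real (sin t)"
  proof -
    have "complex_of_real (sin t) = \<i>*(cnj z - z)/2" by (simp add: z_def cis.ctr complex_eq_iff)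
    hence "z * complex_of_real (sin t) = z * (\<i>*(cnj z - z)/2)" by simp
    also have "\<dots> = \<i>*(z * cnj z - z*z)/2" by (simp add: algebra_simps)
    finally have "z * complex_of_real (sin t) = \<i>*(z * cnj z - z*z)/2" .
    thus ?thesis using zz by (simp add: power2_eq_square)
  qed
  have "poly (pQ d c) (z^2) = (\<Sum>k\<le>d. cf c k * (z * complex_of_real (cos t))^(d-k) * (z * complex_of_real (sin t))^k)"
    unfolding poly_pQ c1[symmetric] c2[symmetric] by (simp add: add.commute)
  also have "\<dots> = z^d * complex_of_real (form_eval d c (vx t))"
  proof -
    have "(\<Sum>k\<le>d. cf c k * (z * complex_of_real (cos t))^(d-k) * (z * complex_of_real (sin t))^k)
       = (\<Sum>k\<le>d. z^d * complex_of_real (c k * cos t^(d-k) * sin t^k))"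
    proof (intro sum.cong refl)
      fix k assume "k \<in> {..d}"
      hence "z^d = z^(d-k) * z^k" by (simp add: power_add[symmetric])
      thus "cf c k * (z * complex_of_real (cos t))^(d-k) * (z * complex_of_real (sin t))^k = z^d * complex_of_real (c k * cos t^(d-k) * sin t^k)"
        by (simp add: cf_def power_mult_distrib mult_ac)
    qed
    thus ?thesis by (simp add: form_eval_def vx_def sum_distrib_left)
  qed
  finally have e1: "z^d * complex_of_real (form_eval d c (vx t)) = (\<Sum>j\<le>d. ac d c j * (z^2)^j)"
    by (simp add: poly_pQ2)
  have e2: "(\<Sum>j\<le>d. ac d c j * (z^2)^j) = (\<Sum>j\<le>d. ac d c j * z^(2*j))" by (simp only: power_mult)
  have e3: "cnj z ^ d * z^d = 1" using zz by (simp add: power_mult_distrib[symmetric] mult.commute)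
  have "complex_of_real (form_eval d c (vx t)) = (cnj z ^ d * z^d) * complex_of_real (form_eval d c (vx t))"
    by (simp add: e3)
  also have "\<dots> = cnj z ^ d * (\<Sum>j\<le>d. ac d c j * z^(2*j))" by (simp only: mult.assoc e1 e2)
  finally have "complex_of_real (form_eval d c (vx t)) = (\<Sum>j\<le>d. ac d c j * z^(2*j)) * cnj z ^ d" by (simp only: mult.commute)
  thus ?thesis by (simp only: z_def)
qed

lemma root_sum:
  assumes d: "d \<ge> 1" and j: "j \<le> d" and l: "l \<le> d"
  shows "(\<Sum>m<d. (cis (2*pi/d) ^ j * cnj (cis (2*pi/d)) ^ l) ^ m)
       = (if j = l \<or> (j = 0 \<and> l = d) \<or> (j = d \<and> l = 0) then of_nat d else 0)"
proof -
  define r where "r = real j - real l"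
  have q: "cis (2*pi/d) ^ j * cnj (cis (2*pi/d)) ^ l = cis (2*pi*r/d)"
  proof -
    have "cis (2*pi/d) ^ j * cnj (cis (2*pi/d)) ^ l = cis (real j * (2*pi/d)) * cis (real l * -(2*pi/d))"
      by (simp add: Complex.DeMoivre cis_cnj)
    also have "\<dots> = cis (2*pi*r/d)" unfolding cis_mult r_def
      by (rule arg_cong[where f=cis]) (use d in \<open>simp add: field_simps\<close>)
    finally show ?thesis .
  qed
  show ?thesis
  proof (cases "j = l \<or> (j = 0 \<and> l = d) \<or> (j = d \<and> l = 0)")
    case True
    hence "r = 0 \<or> r = -d \<or> r = d" by (auto simp: r_def)
    hence "cis (2*pi*r/d) = 1" using d
      by (auto simp: cis_cnj[symmetric])
    thus ?thesis using True q by simp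
  next
    case False
    have ne: "cis (2*pi*r/d) \<noteq> 1"
    proof
      assume "cis (2*pi*r/d) = 1"
      hence "cos (2*pi*r/d) = 1" by (metis cis.sel(1) one_complex.simps(1))
      then obtain n :: int where n: "2*pi*r/d = n * 2 * pi" by (auto simp: cos_one_2pi_int)
      hence rn: "r = n * d" using d by (simp add: field_simps)
      have "\<bar>r\<bar> \<le> d" using j l by (simp add: r_def)
      hence "\<bar>real_of_int n\<bar> * d \<le> 1 * d" using rn by (simp add: abs_mult)
      hence "\<bar>real_of_int n\<bar> \<le> 1" using d by (simp add: mult_le_cancel_right)
      hence "n = 0 \<or> n = 1 \<or> n = -1" by linarith
      hence "r = 0 \<or> r = d \<or> r = -d" using rn by auto
      thus False using False j l by (auto simp: r_def)
    qed
    have pd: "cis (2*pi*r/d) ^ d = 1"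
    proof -
      have "cis (2*pi*r/d) ^ d = cis (2*pi*r)" using d by (simp add: Complex.DeMoivre)
      also have "\<dots> = 1" using cis_multiple_2pi[of r] by (simp add: r_def)
      finally show ?thesis .
    qed
    show ?thesis using False q ne pd by (simp add: sum_gp_strict)
  qed
qed

lemma sqrep: "complex_of_real ((form_eval d c (vx t))^2)
  = (\<Sum>j\<le>d. \<Sum>l\<le>d. ac d c j * cnj (ac d c l) * (cis (2*t) ^ j * cnj (cis (2*t)) ^ l))"
proof -
  define z where "z = cis t"
  define S where "S = (\<Sum>j\<le>d. ac d c j * z ^ (2*j))"
  have zz: "z * cnj z = 1" by (simp add: z_def cis_cnj_mult)
  have P: "complex_of_real (form_eval d c (vx t)) = S * cnj z ^ d" by (simp add: trig_rep S_def z_def)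
  have "complex_of_real ((form_eval d c (vx t))^2) = complex_of_real (form_eval d c (vx t)) * cnj (complex_of_real (form_eval d c (vx t)))"
    by (simp add: power2_eq_square)
  also have "\<dots> = S * cnj S * (z * cnj z)^d" by (simp add: P power_mult_distrib mult_ac)
  also have "\<dots> = S * cnj S" by (simp add: zz)
  also have "\<dots> = (\<Sum>j\<le>d. \<Sum>l\<le>d. (ac d c j * z^(2*j)) * (cnj (ac d c l) * cnj z ^ (2*l)))"
    unfolding S_def cnj_sum complex_cnj_mult complex_cnj_power by (rule sum_product)
  also have "\<dots> = (\<Sum>j\<le>d. \<Sum>l\<le>d. ac d c j * cnj (ac d c l) * (cis (2*t) ^ j * cnj (cis (2*t)) ^ l))"
  proof (intro sum.cong refl)
    fix j l
    have "z^(2*j) = cis (2*t) ^ j" by (simp add: z_def power_mult Complex.DeMoivre)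
    moreover have "cnj z^(2*l) = cnj (cis (2*t)) ^ l" by (simp add: z_def power_mult Complex.DeMoivre cis_cnj)
    ultimately show "(ac d c j * z^(2*j)) * (cnj (ac d c l) * cnj z ^ (2*l)) = ac d c j * cnj (ac d c l) * (cis (2*t) ^ j * cnj (cis (2*t)) ^ l)"
      by (simp add: mult_ac)
  qed
  finally show ?thesis .
qed

lemma dsum_delta: assumes "a \<le> d" "b \<le> d"
  shows "(\<Sum>j\<le>d. \<Sum>l\<le>(d::nat). if j = a \<and> l = b then g j l else 0) = (g a b :: complex)"
proof -
  have "(\<Sum>j\<le>d. \<Sum>l\<le>(d::nat). if j = a \<and> l = b then g j l else 0) = (\<Sum>j\<le>d. if j = a then g j b else 0)"
  proof (intro sum.cong refl)
    fix j show "(\<Sum>l\<le>(d::nat). if j = a \<and> l = b then g j l else 0) = (if j = a then g j b else 0)"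
      using assms by (cases "j = a") simp_all
  qed
  also have "\<dots> = g a b" using assms by simp
  finally show ?thesis .
qed

lemma avg:
  assumes d: "d \<ge> 1"
  shows "(\<Sum>m<d. complex_of_real ((form_eval d c (vx (\<psi> + pi * real m / real d)))^2))
    = of_nat d * ((\<Sum>j\<le>d. ac d c j * cnj (ac d c j)) + ac d c 0 * cnj (ac d c d) * cnj (cis (2*\<psi>)) ^ d
         + ac d c d * cnj (ac d c 0) * cis (2*\<psi>) ^ d)"
proof -
  define \<zeta> where "\<zeta> = cis (2*pi/d)"
  define W where "W j l = cis (2*\<psi>) ^ j * cnj (cis (2*\<psi>)) ^ l" for j l :: nat
  define T where "T j l = ac d c j * cnj (ac d c l) * W j l" for j l
  have cm: "cis (2*(\<psi> + pi * real m / real d)) = cis (2*\<psi>) * \<zeta>^m" for m :: nat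
    by (simp add: \<zeta>_def Complex.DeMoivre cis_mult algebra_simps)
  have "(\<Sum>m<d. complex_of_real ((form_eval d c (vx (\<psi> + pi * real m / real d)))^2))
      = (\<Sum>m<d. \<Sum>j\<le>d. \<Sum>l\<le>d. T j l * (\<zeta>^j * cnj \<zeta> ^ l)^m)"
    unfolding sqrep cm
    by (intro sum.cong refl) (simp add: T_def W_def power_mult_distrib power_mult[symmetric] mult_ac)
  also have "\<dots> = (\<Sum>j\<le>d. \<Sum>m<d. \<Sum>l\<le>d. T j l * (\<zeta>^j * cnj \<zeta> ^ l)^m)" by (rule sum.swap)
  also have "\<dots> = (\<Sum>j\<le>d. \<Sum>l\<le>d. \<Sum>m<d. T j l * (\<zeta>^j * cnj \<zeta> ^ l)^m)" by (intro sum.cong refl sum.swap)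
  also have "\<dots> = (\<Sum>j\<le>d. \<Sum>l\<le>d. T j l * (if j = l \<or> (j = 0 \<and> l = d) \<or> (j = d \<and> l = 0) then of_nat d else 0))"
    by (intro sum.cong refl) (simp add: sum_distrib_left[symmetric] root_sum[OF d] \<zeta>_def)
  also have "\<dots> = (\<Sum>j\<le>d. \<Sum>l\<le>d. (if j = l then of_nat d * T j l else 0) + (if j = 0 \<and> l = d then of_nat d * T j l else 0)
      + (if j = d \<and> l = 0 then of_nat d * T j l else 0))"
    using d by (intro sum.cong refl) auto
  also have "\<dots> = of_nat d * ((\<Sum>j\<le>d. T j j) + T 0 d + T d 0)"
    using d by (simp add: sum.distrib sum_distrib_left dsum_delta[where g="\<lambda>j l. of_nat d * T j l"] algebra_simps)
  finally show ?thesis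
    by (simp add: T_def W_def cis_cnj_mult power_mult_distrib[symmetric] mult_ac)
qed

lemma form_bound: "norm x = 1 \<Longrightarrow> \<bar>form_eval d c x\<bar> \<le> (\<Sum>k\<le>d. \<bar>c k\<bar>)"
proof -
  assume x: "norm x = 1"
  have a1: "\<bar>x$1\<bar> \<le> 1" "\<bar>x$2\<bar> \<le> 1" using component_le_norm_cart[of x] x by auto
  have "\<bar>form_eval d c x\<bar> \<le> (\<Sum>k\<le>d. \<bar>c k * (x$1)^(d-k) * (x$2)^k\<bar>)"
    unfolding form_eval_def by (rule sum_abs)
  also have "\<dots> \<le> (\<Sum>k\<le>d. \<bar>c k\<bar>)"
  proof (intro sum_mono)
    fix k
    have "\<bar>(x$1)^(d-k)\<bar> \<le> 1" "\<bar>(x$2)^k\<bar> \<le> 1" using a1 by (simp_all add: power_abs power_le_one)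
    hence "\<bar>(x$1)^(d-k) * (x$2)^k\<bar> \<le> 1" by (simp add: abs_mult mult_le_one)
    thus "\<bar>c k * (x$1)^(d-k) * (x$2)^k\<bar> \<le> \<bar>c k\<bar>"
      by (simp add: abs_mult mult.assoc mult_left_le)
  qed
  finally show ?thesis .
qed

lemma U_bdd: "bdd_above {\<bar>form_eval d c x\<bar> | x. norm x = 1}"
  by (rule bdd_aboveI[where M="\<Sum>k\<le>d. \<bar>c k\<bar>"]) (auto intro: form_bound)

lemma U_ge: "norm x = 1 \<Longrightarrow> \<bar>form_eval d c x\<bar> \<le> uniform_norm (form_eval d c)"
  unfolding uniform_norm_def by (rule cSup_upper[OF _ U_bdd]) auto

lemma U_nonneg: "0 \<le> uniform_norm (form_eval d c)"
  using U_ge[OF norm_vx[of 0], of d c] by linarith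

lemma U_le: "(\<And>x. norm x = 1 \<Longrightarrow> \<bar>p x\<bar> \<le> M) \<Longrightarrow> uniform_norm p \<le> M"
  unfolding uniform_norm_def by (rule cSup_least) (use norm_vx in auto)

lemma LB:
  assumes d: "d \<ge> 1"
  shows "(\<Sum>j\<le>d. (cmod (ac d c j))^2) + 2 * (cmod (ac d c d))^2 \<le> (uniform_norm (form_eval d c))^2"
proof -
  define A where "A = ac d c d ^ 2"
  define \<psi> where "\<psi> = - Arg A / (2 * d)"
  have cd: "cis (2*\<psi>) ^ d = cis (- Arg A)" using d by (simp add: Complex.DeMoivre \<psi>_def)
  have a0: "cnj (ac d c 0) = ac d c d" using ac_sym[of d d c] by simp
  have t3: "ac d c d * cnj (ac d c 0) * cis (2*\<psi>) ^ d = complex_of_real ((cmod (ac d c d))^2)"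
  proof -
    have "ac d c d * cnj (ac d c 0) * cis (2*\<psi>) ^ d = A * cis (- Arg A)" by (simp add: a0 cd A_def power2_eq_square)
    also have "\<dots> = complex_of_real (cmod A) * (cis (Arg A) * cis (- Arg A))"
      using rcis_cmod_Arg[of A] by (simp add: rcis_def mult.assoc)
    also have "\<dots> = complex_of_real (cmod A)" by (simp add: cis_mult)
    finally show ?thesis by (simp add: A_def norm_power)
  qed
  have t2: "ac d c 0 * cnj (ac d c d) * cnj (cis (2*\<psi>)) ^ d = complex_of_real ((cmod (ac d c d))^2)"
  proof -
    have "ac d c 0 * cnj (ac d c d) * cnj (cis (2*\<psi>)) ^ d = cnj (ac d c d * cnj (ac d c 0) * cis (2*\<psi>) ^ d)"
      by (simp add: mult_ac)
    thus ?thesis by (simp only: t3) simp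
  qed
  have t1: "(\<Sum>j\<le>d. ac d c j * cnj (ac d c j)) = complex_of_real (\<Sum>j\<le>d. (cmod (ac d c j))^2)"
    unfolding of_real_sum by (simp add: complex_norm_square del: of_real_power)
  define S where "S = (\<Sum>j\<le>d. (cmod (ac d c j))^2) + 2 * (cmod (ac d c d))^2"
  have "complex_of_real (\<Sum>m<d. (form_eval d c (vx (\<psi> + pi * real m / real d)))^2) = complex_of_real (real d * S)"
    using avg[OF d, of c \<psi>] by (simp add: t1 t2 t3 S_def)
  hence eq: "(\<Sum>m<d. (form_eval d c (vx (\<psi> + pi * real m / real d)))^2) = real d * S"
    using of_real_eq_iff by blast
  have "(\<Sum>m<d. (form_eval d c (vx (\<psi> + pi * real m / real d)))^2) \<le> (\<Sum>m<d. (uniform_norm (form_eval d c))^2)"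
  proof (intro sum_mono)
    fix m
    have "\<bar>form_eval d c (vx (\<psi> + pi * real m / real d))\<bar> \<le> uniform_norm (form_eval d c)"
      by (rule U_ge[OF norm_vx])
    thus "(form_eval d c (vx (\<psi> + pi * real m / real d)))^2 \<le> (uniform_norm (form_eval d c))^2"
      by (metis abs_ge_zero power2_abs power_mono)
  qed
  hence "real d * S \<le> real d * (uniform_norm (form_eval d c))^2" using eq by simp
  thus ?thesis using d by (simp add: S_def)
qed

definition zc :: "real^2 \<Rightarrow> complex" where "zc x = complex_of_real (x$1) + \<i> * complex_of_real (x$2)"

lemma cmod_zc: "cmod (zc x) = norm x"
  by (simp add: zc_def norm2 cmod_def)

lemma Re_mr: "Re (z * complex_of_real r) = Re z * r" by simp

lemma L1: "Re (W * zc x ^ d) = form_eval d (\<lambda>k. Re (W * of_nat (d choose k) * \<i>^k)) x"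
proof -
  have "zc x ^ d = (\<i> * complex_of_real (x$2) + complex_of_real (x$1))^d" by (simp add: zc_def add.commute)
  also have "\<dots> = (\<Sum>k\<le>d. of_nat (d choose k) * (\<i> * complex_of_real (x$2))^k * complex_of_real (x$1)^(d-k))"
    by (simp add: binomial_ring atLeast0AtMost)
  finally have "W * zc x ^ d = (\<Sum>k\<le>d. (W * of_nat (d choose k) * \<i>^k) * complex_of_real ((x$1)^(d-k) * (x$2)^k))"
    by (simp add: sum_distrib_left power_mult_distrib mult_ac)
  hence "Re (W * zc x ^ d) = (\<Sum>k\<le>d. Re (W * of_nat (d choose k) * \<i>^k) * ((x$1)^(d-k) * (x$2)^k))"
    by (simp only: Re_sum Re_mr)
  thus ?thesis by (simp add: form_eval_def mult_ac)
qed

lemma Re_i_pow_sq: "(Re (W * \<i>^k))^2 = (if even k then (Re W)^2 else (Im W)^2)"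
proof (cases "even k")
  case True
  then obtain m where "k = 2*m" by auto
  hence "\<i>^k = (-1)^m" by (simp add: power_mult)
  thus ?thesis using True by (cases "even m") auto
next
  case False
  then obtain m where "k = 2*m+1" using oddE by blast
  hence "\<i>^k = (-1)^m * \<i>" by (simp add: power_mult)
  thus ?thesis using False by (cases "even m") auto
qed

lemma sum_even_odd: assumes "d \<ge> 1"
  shows "(\<Sum>k\<le>d. real (d choose k) * (if even k then a else b)) = 2^(d-1) * (a + b)"
proof -
  have e: "2 * (\<Sum>i\<le>d. if even i then real (d choose i) else 0) = 2^d" using assms by (intro choose_even_sum) simp
  have o: "2 * (\<Sum>i\<le>d. if odd i then real (d choose i) else 0) = 2^d" using assms by (intro choose_odd_sum) simp
  have "(\<Sum>k\<le>d. real (d choose k) * (if even k then a else b))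
      = a * (\<Sum>i\<le>d. if even i then real (d choose i) else 0) + b * (\<Sum>i\<le>d. if odd i then real (d choose i) else 0)"
    by (simp add: sum_distrib_left sum.distrib[symmetric] if_distrib cong: if_cong) (intro sum.cong; auto)
  also have "\<dots> = a * 2^(d-1) + b * 2^(d-1)"
    using e o assms by (metis (no_types) mult_2 power_eq_if field_sum_of_halves not_one_le_zero
        nonzero_mult_div_cancel_left zero_neq_numeral)
  finally show ?thesis by (simp add: algebra_simps)
qed

lemma zc_vx: "zc (vx t) = cis t"
  by (simp add: zc_def vx_def complex_eq_iff)

lemma CL:
  assumes d: "d \<ge> 1" and W: "W \<noteq> 0" and f: "\<And>x. form_eval d c x = Re (W * zc x ^ d)"
  shows "ratio d c = 1 / sqrt (2^(d-1))"
proof -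
  have ck: "\<forall>k\<le>d. c k = Re (W * of_nat (d choose k) * \<i>^k)"
    by (rule form_coeff_unique) (simp only: f L1)
  have "(\<Sum>k\<le>d. (c k)^2 / real (d choose k)) = (\<Sum>k\<le>d. real (d choose k) * (if even k then (Re W)^2 else (Im W)^2))"
  proof (intro sum.cong refl)
    fix k assume "k \<in> {..d}"
    hence k: "k \<le> d" by simp
    have "c k = real (d choose k) * Re (W * \<i>^k)"
      using ck k by (simp add: algebra_simps)
    hence "(c k)^2 / real (d choose k) = real (d choose k) * (Re (W * \<i>^k))^2"
      using k by (simp add: power2_eq_square)
    thus "(c k)^2 / real (d choose k) = real (d choose k) * (if even k then (Re W)^2 else (Im W)^2)"
      by (simp only: Re_i_pow_sq)
  qed
  also have "\<dots> = 2^(d-1) * (cmod W)^2" using d by (simp add: sum_even_odd cmod_power2)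
  finally have B: "bombieri_norm d c = sqrt (2^(d-1)) * cmod W"
    by (simp add: bombieri_norm_def real_sqrt_mult)
  have U1: "uniform_norm (form_eval d c) \<le> cmod W"
  proof (rule U_le)
    fix x :: "real^2" assume x: "norm x = 1"
    have "\<bar>form_eval d c x\<bar> \<le> cmod (W * zc x ^ d)" unfolding f by (rule abs_Re_le_cmod)
    also have "\<dots> = cmod W" using x by (simp add: norm_mult norm_power cmod_zc)
    finally show "\<bar>form_eval d c x\<bar> \<le> cmod W" .
  qed
  have U2: "cmod W \<le> uniform_norm (form_eval d c)"
  proof -
    define t where "t = - Arg W / d"
    have "cis t ^ d = cis (- Arg W)" using d by (simp add: Complex.DeMoivre t_def)
    hence "W * zc (vx t) ^ d = complex_of_real (cmod W) * (cis (Arg W) * cis (- Arg W))"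
      using rcis_cmod_Arg[of W] by (simp add: zc_vx rcis_def mult.assoc)
    hence "W * zc (vx t) ^ d = complex_of_real (cmod W)" by (simp add: cis_mult)
    hence "form_eval d c (vx t) = cmod W" by (simp add: f)
    thus ?thesis using U_ge[OF norm_vx, of d c t] by simp
  qed
  have "uniform_norm (form_eval d c) = cmod W" using U1 U2 by simp
  thus ?thesis using W by (simp add: ratio_def B)
qed

lemma cheb_Re: "form_eval d (cheb_coeff d) x = Re (1 * zc x ^ d)"
proof -
  have "form_eval d (cheb_coeff d) x = form_eval d (\<lambda>k. Re (1 * of_nat (d choose k) * \<i>^k)) x"
    unfolding form_eval_def
  proof (intro sum.cong refl)
    fix k
    have "cheb_coeff d k = Re (1 * of_nat (d choose k) * \<i>^k)"
    proof (cases "even k")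
      case True
      then obtain m where "k = 2*m" by auto
      thus ?thesis by (simp add: cheb_coeff_def power_mult)
    next
      case False
      then obtain m where "k = 2*m+1" using oddE by blast
      thus ?thesis by (simp add: cheb_coeff_def power_mult)
    qed
    thus "cheb_coeff d k * (x$1)^(d-k) * (x$2)^k = Re (1 * of_nat (d choose k) * \<i>^k) * (x$1)^(d-k) * (x$2)^k" by simp
  qed
  thus ?thesis by (simp only: L1)
qed

lemma cheb_ratio: "d \<ge> 1 \<Longrightarrow> ratio d (cheb_coeff d) = 1 / sqrt (2^(d-1))"
  by (rule CL[where W=1]) (simp_all add: cheb_Re)

definition rot :: "real \<Rightarrow> real^2 \<Rightarrow> real^2" where
  "rot a x = vector [cos a * x$1 - sin a * x$2, sin a * x$1 + cos a * x$2]"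

lemma zc_rot: "zc (rot a x) = cis a * zc x"
  by (simp add: zc_def rot_def complex_eq_iff)

lemma zc_inj: "zc x = zc y \<Longrightarrow> x = y"
  by (simp add: zc_def complex_eq_iff vec_eq_iff forall_2)

lemma rot_rot: "rot a (rot (-a) x) = x"
  by (rule zc_inj) (simp add: zc_rot mult.assoc[symmetric] cis_mult)

lemma norm_rot: "norm (rot a x) = norm x"
proof -
  have "cmod (zc (rot a x)) = cmod (zc x)" by (simp add: zc_rot norm_mult)
  thus ?thesis by (simp add: cmod_zc)
qed

lemma orth_rot: "orthogonal_transformation (rot a)"
  unfolding orthogonal_transformation
proof (intro conjI allI linearI norm_rot)
  fix x y :: "real^2" show "rot a (x + y) = rot a x + rot a y"
    by (simp add: rot_def vec_eq_iff forall_2 algebra_simps)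
next
  fix r and x :: "real^2" show "rot a (r *\<^sub>R x) = r *\<^sub>R rot a x"
    by (simp add: rot_def vec_eq_iff forall_2 algebra_simps)
qed

lemma inv_rot: "inv (rot (-a)) = rot a"
  by (rule inv_equality) (use rot_rot[of a] rot_rot[of "-a"] in auto)

lemma Re_to_co:
  assumes d: "d \<ge> 1" and W: "W \<noteq> 0"
  shows "\<exists>s \<rho>. in_CO2 s \<rho> \<and> (\<lambda>x. Re (W * zc x ^ d)) = co_action s \<rho> (form_eval d (cheb_coeff d))"
proof -
  define a where "a = Arg W / d"
  have "cis a ^ d = cis (Arg W)" using d by (simp add: Complex.DeMoivre a_def)
  hence sW: "complex_of_real (cmod W) * cis a ^ d = W" using rcis_cmod_Arg[of W] by (simp add: rcis_def)
  have "in_CO2 (cmod W) (rot (-a))" using W by (simp add: in_CO2_def orth_rot)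
  moreover have "(\<lambda>x. Re (W * zc x ^ d)) = co_action (cmod W) (rot (-a)) (form_eval d (cheb_coeff d))"
  proof
    fix x
    have "co_action (cmod W) (rot (-a)) (form_eval d (cheb_coeff d)) x = cmod W * Re ((cis a * zc x) ^ d)"
      by (simp add: co_action_def inv_rot cheb_Re zc_rot)
    also have "\<dots> = Re ((complex_of_real (cmod W) * cis a ^ d) * zc x ^ d)"
      by (simp add: power_mult_distrib mult.assoc)
    also have "\<dots> = Re (W * zc x ^ d)" by (simp only: sW)
    finally show "Re (W * zc x ^ d) = co_action (cmod W) (rot (-a)) (form_eval d (cheb_coeff d)) x" by simp
  qed
  ultimately show ?thesis by blast
qed

lemma orth_pair:
  fixes p q r t :: real
  assumes h1: "p^2 + q^2 = 1" and h2: "r^2 + t^2 = 1" and h3: "p*r + q*t = 0"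
  shows "(r = -q \<and> t = p) \<or> (r = q \<and> t = -p)"
proof -
  define l where "l = t*p - r*q"
  have r: "r = -l*q"
  proof -
    have "r = r*(p^2+q^2)" using h1 by simp
    also have "\<dots> = -l*q + p*(p*r+q*t)" by (simp add: l_def algebra_simps power2_eq_square)
    finally show ?thesis using h3 by simp
  qed
  have t: "t = l*p"
  proof -
    have "t = t*(p^2+q^2)" using h1 by simp
    also have "\<dots> = l*p + q*(p*r+q*t)" by (simp add: l_def algebra_simps power2_eq_square)
    finally show ?thesis using h3 by simp
  qed
  have "l^2 = (r^2+t^2)*(p^2+q^2) - (p*r+q*t)^2" by (simp add: l_def algebra_simps power2_eq_square)
  hence "l^2 = 1" using h1 h2 h3 by simp
  hence "l = 1 \<or> l = -1" by (simp add: power2_eq_1_iff)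
  thus ?thesis using r t by auto
qed

lemma co_to_Re:
  assumes "in_CO2 s \<rho>"
  shows "\<exists>W. W \<noteq> 0 \<and> (\<forall>x. co_action s \<rho> (form_eval d (cheb_coeff d)) x = Re (W * zc x ^ d))"
proof -
  have s: "s > 0" and orth: "orthogonal_transformation \<rho>" using assms by (auto simp: in_CO2_def)
  define \<sigma> where "\<sigma> = inv \<rho>"
  have os: "orthogonal_transformation \<sigma>" unfolding \<sigma>_def by (rule orthogonal_transformation_inv[OF orth])
  hence lin: "linear \<sigma>" and ip: "\<And>v w. \<sigma> v \<bullet> \<sigma> w = v \<bullet> w" by (auto simp: orthogonal_transformation_def)
  define e1 :: "real^2" where "e1 = vector [1, 0]"
  define e2 :: "real^2" where "e2 = vector [0, 1]"
  define u where "u = \<sigma> e1"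
  define v where "v = \<sigma> e2"
  have xe: "x = (x$1) *\<^sub>R e1 + (x$2) *\<^sub>R e2" for x :: "real^2"
    by (simp add: e1_def e2_def vec_eq_iff forall_2)
  have sx: "\<sigma> x = (x$1) *\<^sub>R u + (x$2) *\<^sub>R v" for x
  proof -
    have "\<sigma> x = \<sigma> ((x$1) *\<^sub>R e1 + (x$2) *\<^sub>R e2)" by (rule arg_cong[where f=\<sigma>, OF xe])
    also have "\<dots> = (x$1) *\<^sub>R u + (x$2) *\<^sub>R v" by (simp add: linear_add[OF lin] linear_scale[OF lin] u_def v_def)
    finally show ?thesis .
  qed
  have zlin: "zc (a *\<^sub>R u + b *\<^sub>R v) = complex_of_real a * zc u + complex_of_real b * zc v" for a b
    by (simp add: zc_def algebra_simps)
  have iv: "w \<bullet> w' = w$1 * w'$1 + w$2 * w'$2" for w w' :: "real^2" by (simp add: inner_vec_def sum_2)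
  have uu: "u$1^2 + u$2^2 = 1" using ip[of e1 e1] by (simp add: u_def iv e1_def power2_eq_square)
  have vv: "v$1^2 + v$2^2 = 1" using ip[of e2 e2] by (simp add: v_def iv e2_def power2_eq_square)
  have uv: "u$1 * v$1 + u$2 * v$2 = 0" using ip[of e1 e2] by (simp add: u_def v_def iv e1_def e2_def)
  define \<zeta> where "\<zeta> = zc u"
  have z1: "cmod \<zeta> = 1" using uu by (simp add: \<zeta>_def cmod_zc norm2)
  hence zn: "\<zeta> \<noteq> 0" by auto
  have f: "co_action s \<rho> (form_eval d (cheb_coeff d)) x = s * Re (zc (\<sigma> x) ^ d)" for x
    by (simp add: co_action_def \<sigma>_def cheb_Re)
  from orth_pair[OF uu vv uv] show ?thesis
  proof
    assume h: "v$1 = - u$2 \<and> v$2 = u$1"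
    have zv: "zc v = \<i> * \<zeta>" using h by (simp add: \<zeta>_def zc_def algebra_simps)
    have "zc (\<sigma> x) = \<zeta> * zc x" for x
    proof -
      have "zc (\<sigma> x) = complex_of_real (x$1) * \<zeta> + complex_of_real (x$2) * zc v" by (simp add: sx zlin \<zeta>_def)
      also have "\<dots> = \<zeta> * zc x" unfolding zv by (simp add: zc_def[of x] algebra_simps)
      finally show ?thesis .
    qed
    hence "co_action s \<rho> (form_eval d (cheb_coeff d)) x = Re ((complex_of_real s * \<zeta>^d) * zc x ^ d)" for x
      by (simp add: f power_mult_distrib mult.assoc)
    moreover have "complex_of_real s * \<zeta>^d \<noteq> 0" using s zn by simp
    ultimately show ?thesis by blast
  next
    assume h: "v$1 = u$2 \<and> v$2 = - u$1"
    have zv: "zc v = - \<i> * \<zeta>" using h by (simp add: \<zeta>_def zc_def algebra_simps)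
    have "zc (\<sigma> x) = \<zeta> * cnj (zc x)" for x
    proof -
      have "zc (\<sigma> x) = complex_of_real (x$1) * \<zeta> + complex_of_real (x$2) * zc v" by (simp add: sx zlin \<zeta>_def)
      also have "\<dots> = \<zeta> * cnj (zc x)" unfolding zv by (simp add: zc_def[of x] algebra_simps)
      finally show ?thesis .
    qed
    hence zs: "zc (\<sigma> x) = \<zeta> * cnj (zc x)" for x .
    have rc: "Re (a * cnj b) = Re (cnj a * b)" for a b by simp
    have "co_action s \<rho> (form_eval d (cheb_coeff d)) x = Re ((complex_of_real s * cnj \<zeta>^d) * zc x ^ d)" for x
    proof -
      have "co_action s \<rho> (form_eval d (cheb_coeff d)) x = s * Re ((\<zeta> * cnj (zc x))^d)" by (simp only: f zs)
      also have "(\<zeta> * cnj (zc x))^d = \<zeta>^d * cnj (zc x ^ d)" by (simp add: power_mult_distrib)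
      also have "Re (\<zeta>^d * cnj (zc x ^ d)) = Re (cnj (\<zeta>^d) * zc x ^ d)" by (rule rc)
      finally show ?thesis by (simp add: algebra_simps)
    qed
    moreover have "complex_of_real s * cnj \<zeta>^d \<noteq> 0" using s zn by simp
    ultimately show ?thesis by blast
  qed
qed

definition xx :: "nat \<Rightarrow> (nat \<Rightarrow> real) \<Rightarrow> nat \<Rightarrow> real" where "xx d c j = (cmod (ac d c j))^2"
definition DD :: "nat \<Rightarrow> (nat \<Rightarrow> real) \<Rightarrow> nat \<Rightarrow> real" where
  "DD d c j = (if j = 0 \<or> j = d then 0 else (1 - 2 / real (d choose j)) * xx d c j)"

lemma xx0: "xx d c 0 = xx d c d"
  using ac_sym[of d d c] by (simp add: xx_def)

lemma DD_nonneg: "j \<le> d \<Longrightarrow> 0 \<le> DD d c j"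
proof -
  assume j: "j \<le> d"
  show ?thesis
  proof (cases "j = 0 \<or> j = d")
    case False
    hence "0 < j" "j < d" using j by auto
    hence "d \<le> d choose j" by (rule upper_le_binomial)
    moreover have "2 \<le> d" using \<open>0 < j\<close> \<open>j < d\<close> by simp
    ultimately have "2 \<le> real (d choose j)" by linarith
    hence "2 / real (d choose j) \<le> 1" by (simp add: divide_le_eq)
    hence "0 \<le> 1 - 2 / real (d choose j)" by simp
    thus ?thesis using False by (simp add: DD_def xx_def)
  qed (simp add: DD_def)
qed

lemma gap: assumes d: "d \<ge> 1"
  shows "(\<Sum>j\<le>d. xx d c j) + 2 * xx d c d - 2 * (\<Sum>j\<le>d. xx d c j / real (d choose j)) = (\<Sum>j\<le>d. DD d c j)"
proof -
  have "(\<Sum>j\<le>d. xx d c j - 2 * (xx d c j / real (d choose j)))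
      = (\<Sum>j\<le>d. DD d c j + ((if j = 0 then - xx d c j else 0) + (if j = d then - xx d c j else 0)))"
    using d by (intro sum.cong refl) (auto simp: DD_def algebra_simps)
  also have "\<dots> = (\<Sum>j\<le>d. DD d c j) - xx d c 0 - xx d c d" by (simp add: sum.distrib)
  finally show ?thesis using xx0[of d c] by (simp add: sum_subtractf sum_distrib_left)
qed

lemma bomb_sq: "(bombieri_norm d c)^2 = (\<Sum>k\<le>d. (c k)^2 / real (d choose k))"
  unfolding bombieri_norm_def by (rule real_sqrt_pow2) (intro sum_nonneg divide_nonneg_nonneg; simp)

lemma key: assumes d: "d \<ge> 1"
  shows "(bombieri_norm d c)^2 + 2^(d-1) * (\<Sum>j\<le>d. DD d c j) = 2^(d-1) * ((\<Sum>j\<le>d. xx d c j) + 2 * xx d c d)"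
proof -
  have p: "(2::real)^d = 2^(d-1) * 2" using d by (metis power_minus_mult less_le_trans zero_less_one)
  have b0: "(bombieri_norm d c)^2 = 2^d * (\<Sum>j\<le>d. xx d c j / real (d choose j))"
    unfolding bomb_sq bomb_id[where c=c and d=d] xx_def by (rule refl)
  have b: "(bombieri_norm d c)^2 = 2^(d-1) * (2 * (\<Sum>j\<le>d. xx d c j / real (d choose j)))"
    unfolding b0 p by (simp only: mult_ac)
  have g: "(\<Sum>j\<le>d. xx d c j) + 2 * xx d c d = 2 * (\<Sum>j\<le>d. xx d c j / real (d choose j)) + (\<Sum>j\<le>d. DD d c j)"
    using gap[OF d, of c] by linarith
  show ?thesis unfolding b g by (simp add: distrib_left)
qed

lemma main_ineq: assumes d: "d \<ge> 1"
  shows "(bombieri_norm d c)^2 \<le> 2^(d-1) * (uniform_norm (form_eval d c))^2"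
proof -
  have "0 \<le> (\<Sum>j\<le>d. DD d c j)" by (intro sum_nonneg DD_nonneg) simp
  hence a: "0 \<le> 2^(d-1) * (\<Sum>j\<le>d. DD d c j)" by simp
  have "(\<Sum>j\<le>d. xx d c j) + 2 * xx d c d \<le> (uniform_norm (form_eval d c))^2"
    unfolding xx_def by (rule LB[OF d])
  hence "2^(d-1) * ((\<Sum>j\<le>d. xx d c j) + 2 * xx d c d) \<le> 2^(d-1) * (uniform_norm (form_eval d c))^2"
    by (rule mult_left_mono) simp
  thus ?thesis using key[OF d, of c] a by linarith
qed

lemma bomb_pos: "nonzero_form d c \<Longrightarrow> 0 < bombieri_norm d c"
proof -
  assume "nonzero_form d c"
  then obtain k where k: "k \<le> d" "c k \<noteq> 0" by (auto simp: nonzero_form_def)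
  have "0 < (c k)^2 / real (d choose k)" using k by simp
  also have "\<dots> \<le> (\<Sum>k\<le>d. (c k)^2 / real (d choose k))"
    by (rule member_le_sum) (use k in auto)
  finally show ?thesis by (simp add: bombieri_norm_def)
qed

lemma ratio_ge: assumes d: "d \<ge> 1" and nz: "nonzero_form d c"
  shows "1 / sqrt (2^(d-1)) \<le> ratio d c"
proof -
  define U where "U = uniform_norm (form_eval d c)"
  define B where "B = bombieri_norm d c"
  have B: "0 < B" using bomb_pos[OF nz] by (simp add: B_def)
  have U: "0 \<le> U" by (simp add: U_def U_nonneg)
  have sq: "(sqrt (2^(d-1)) * U)^2 = 2^(d-1) * U^2" by (simp add: power_mult_distrib)
  have "B^2 \<le> 2^(d-1) * U^2" unfolding B_def U_def by (rule main_ineq[OF d])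
  hence "B^2 \<le> (sqrt (2^(d-1)) * U)^2" by (simp only: sq)
  hence "B \<le> sqrt (2^(d-1)) * U" by (rule power2_le_imp_le) (use U in simp)
  moreover have sK: "0 < sqrt (2^(d-1))" by simp
  ultimately have "0 \<le> (U * sqrt (2^(d-1)) - B) / (B * sqrt (2^(d-1)))" using B
    by (intro divide_nonneg_nonneg) (simp_all add: mult.commute)
  also have "(U * sqrt (2^(d-1)) - B) / (B * sqrt (2^(d-1))) = U / B - 1 / sqrt (2^(d-1))"
    using B sK by (simp add: field_simps)
  finally show ?thesis by (simp add: ratio_def U_def[symmetric] B_def[symmetric])
qed

lemma eq_DD: assumes d: "d \<ge> 1" and nz: "nonzero_form d c" and eq: "ratio d c = 1 / sqrt (2^(d-1))"
  shows "\<forall>j\<le>d. DD d c j = 0"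
    and "2^(d-1) * (uniform_norm (form_eval d c))^2 = (bombieri_norm d c)^2"
proof -
  define U where "U = uniform_norm (form_eval d c)"
  define B where "B = bombieri_norm d c"
  have B: "0 < B" using bomb_pos[OF nz] by (simp add: B_def)
  have "U / B = 1 / sqrt (2^(d-1))" using eq by (simp add: ratio_def U_def B_def)
  hence "U * sqrt (2^(d-1)) = B" using B by (simp add: field_simps)
  hence "(U * sqrt (2^(d-1)))^2 = B^2" by simp
  hence UB: "2^(d-1) * U^2 = B^2" by (simp add: power_mult_distrib mult.commute)
  thus "2^(d-1) * (uniform_norm (form_eval d c))^2 = (bombieri_norm d c)^2" by (simp add: U_def B_def)
  have "(\<Sum>j\<le>d. xx d c j) + 2 * xx d c d \<le> U^2"
    unfolding xx_def U_def by (rule LB[OF d])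
  hence "2^(d-1) * ((\<Sum>j\<le>d. xx d c j) + 2 * xx d c d) \<le> 2^(d-1) * U^2" by simp
  hence "2^(d-1) * (\<Sum>j\<le>d. DD d c j) \<le> 0" using key[OF d, of c] UB unfolding B_def by linarith
  moreover have K: "0 < (2::real)^(d-1)" by simp
  ultimately have "(\<Sum>j\<le>d. DD d c j) \<le> 0" by (metis mult_le_0_iff not_less)
  moreover have "\<forall>j\<in>{..d}. 0 \<le> DD d c j" by (auto intro: DD_nonneg)
  ultimately have "(\<Sum>j\<le>d. DD d c j) = 0" by (meson order.antisym sum_nonneg)
  thus "\<forall>j\<le>d. DD d c j = 0" using sum_nonneg_eq_0_iff[of "{..d}" "DD d c"] DD_nonneg by auto
qed

lemma vc_top: assumes k: "k \<le> d" shows "vc d d k = of_nat (d choose k) * \<i>^k"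
proof -
  have h: "(\<Sum>k\<le>d. vc d d k * y^k) = (\<Sum>k\<le>d. (of_nat (d choose k) * \<i>^k) * y^k)" for y
  proof -
    have "(\<Sum>k\<le>d. vc d d k * y^k) = (\<i>*y + 1)^d" by (simp add: EV add.commute)
    also have "\<dots> = (\<Sum>k\<le>d. (of_nat (d choose k) * \<i>^k) * y^k)"
      by (simp add: binomial_ring atLeast0AtMost power_mult_distrib mult_ac)
    finally show ?thesis .
  qed
  have "\<forall>y. (\<Sum>k\<le>d. vc d d k * y^k) = (\<Sum>k\<le>d. (of_nat (d choose k) * \<i>^k) * y^k)" using h by (rule allI)
  from polyfun_eq_coeffs[THEN iffD1, OF this] k show ?thesis by simp
qed

lemma MZ_coeff:
  assumes d: "d \<ge> 1" and mid: "\<And>j. 0 < j \<Longrightarrow> j < d \<Longrightarrow> ac d c j = 0" and k: "k \<le> d"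
  shows "c k = Re (2 * ac d c d * of_nat (d choose k) * \<i>^k)"
proof -
  have "cf c k = (\<Sum>j\<le>d. ac d c j * vc d j k)" by (rule A4[OF k])
  also have "\<dots> = (\<Sum>j\<le>d. (if j = 0 then ac d c j * vc d j k else 0) + (if j = d then ac d c j * vc d j k else 0))"
    using d by (intro sum.cong refl) (auto simp: mid)
  also have "\<dots> = ac d c 0 * vc d 0 k + ac d c d * vc d d k" by (simp add: sum.distrib)
  also have "\<dots> = cnj (ac d c d * vc d d k) + ac d c d * vc d d k"
    using ac_sym[of d d c] vc_cnj[of d d k] k by simp
  finally have "cf c k = cnj (ac d c d * vc d d k) + ac d c d * vc d d k" .
  hence "c k = 2 * Re (ac d c d * vc d d k)" by (simp add: cf_def complex_eq_iff)
  thus ?thesis using vc_top[OF k] by (simp add: mult.assoc)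
qed

lemma MZ:
  assumes d: "d \<ge> 1" and mid: "\<And>j. 0 < j \<Longrightarrow> j < d \<Longrightarrow> ac d c j = 0"
  shows "form_eval d c x = Re (2 * ac d c d * zc x ^ d)"
proof -
  have "form_eval d c x = form_eval d (\<lambda>k. Re (2 * ac d c d * of_nat (d choose k) * \<i>^k)) x"
    unfolding form_eval_def by (intro sum.cong refl) (simp add: MZ_coeff[OF d mid])
  thus ?thesis by (simp only: L1)
qed

lemma MZ_nz:
  assumes d: "d \<ge> 1" and mid: "\<And>j. 0 < j \<Longrightarrow> j < d \<Longrightarrow> ac d c j = 0" and nz: "nonzero_form d c"
  shows "2 * ac d c d \<noteq> 0"
proof
  assume "2 * ac d c d = 0"
  hence "ac d c d = 0" by simp
  moreover obtain k where "k \<le> d" "c k \<noteq> 0" using nz by (auto simp: nonzero_form_def)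
  ultimately show False using MZ_coeff[OF d mid] by simp
qed

lemma ge3_forward:
  assumes d: "d \<ge> 3" and nz: "nonzero_form d c" and eq: "ratio d c = ratio d (cheb_coeff d)"
  shows "\<exists>s \<rho>. in_CO2 s \<rho> \<and> form_eval d c = co_action s \<rho> (form_eval d (cheb_coeff d))"
proof -
  have d1: "d \<ge> 1" using d by simp
  have eq': "ratio d c = 1 / sqrt (2^(d-1))" using eq cheb_ratio[OF d1] by simp
  have DD0: "\<forall>j\<le>d. DD d c j = 0" by (rule eq_DD(1)[OF d1 nz eq'])
  have mid: "ac d c j = 0" if j: "0 < j" "j < d" for j
  proof -
    have "d \<le> d choose j" using j by (rule upper_le_binomial)
    hence "3 \<le> real (d choose j)" using d by linarith
    hence "2 / real (d choose j) < 1" by (simp add: divide_less_eq)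
    hence "0 < 1 - 2 / real (d choose j)" by simp
    moreover have "DD d c j = 0" using DD0 j by simp
    hence "(1 - 2 / real (d choose j)) * xx d c j = 0" using j by (simp add: DD_def)
    ultimately have "xx d c j = 0" by (metis mult_eq_0_iff order_less_irrefl)
    thus ?thesis by (simp add: xx_def)
  qed
  have f: "form_eval d c = (\<lambda>x. Re (2 * ac d c d * zc x ^ d))" using MZ[OF d1 mid] by auto
  show ?thesis unfolding f by (rule Re_to_co[OF d1 MZ_nz[OF d1 mid nz]])
qed

lemma co_back:
  assumes d: "d \<ge> 1" and "in_CO2 s \<rho>" and f: "form_eval d c = co_action s \<rho> (form_eval d (cheb_coeff d))"
  shows "ratio d c = ratio d (cheb_coeff d)"
proof -
  obtain W where W: "W \<noteq> 0" "\<forall>x. co_action s \<rho> (form_eval d (cheb_coeff d)) x = Re (W * zc x ^ d)"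
    using co_to_Re[OF assms(2)] by blast
  have "ratio d c = 1 / sqrt (2^(d-1))" by (rule CL[OF d W(1)]) (simp add: f W(2))
  thus ?thesis using cheb_ratio[OF d] by simp
qed

lemma d1_case: assumes nz: "nonzero_form 1 c" shows "ratio 1 c = ratio 1 (cheb_coeff 1)"
proof -
  define W where "W = complex_of_real (c 0) - \<i> * complex_of_real (c 1)"
  have f: "form_eval 1 c x = Re (W * zc x ^ 1)" for x
    by (simp add: form_eval_def W_def zc_def)
  have W: "W \<noteq> 0"
  proof
    assume "W = 0"
    hence "c 0 = 0" "c 1 = 0" by (simp_all add: W_def complex_eq_iff)
    moreover obtain k where "k \<le> 1" "c k \<noteq> 0" using nz by (auto simp: nonzero_form_def)
    ultimately show False by (cases k) auto
  qed
  have "ratio 1 c = 1 / sqrt (2^(1-1))"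
  proof (rule CL)
    show "1 \<le> (1::nat)" by simp
    show "W \<noteq> 0" by (rule W)
    show "form_eval 1 c x = Re (W * zc x ^ 1)" for x by (rule f)
  qed
  thus ?thesis using cheb_ratio[of 1] by simp
qed

lemma vc21: "vc 2 1 0 = 1" "vc 2 1 1 = 0" "vc 2 1 2 = 1"
  by (simp_all add: vc_def pV_def numeral_2_eq_2)

lemma cheb2: "form_eval 2 (cheb_coeff 2) = (\<lambda>x. (x$1)^2 - (x$2)^2)"
  by (rule ext) (simp add: form_eval_def cheb_coeff_def numeral_2_eq_2)

lemma d2_val: "form_eval 2 c (vx t) = Re (ac 2 c 1) + 2 * Re (ac 2 c 2 * cis (2*t))"
proof -
  define w where "w = cis (2*t)"
  have ww: "w * cnj w = 1" by (simp add: w_def cis_cnj_mult)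
  have a0: "ac 2 c 0 = cnj (ac 2 c 2)" using ac_sym[of 2 2 c] by simp
  have a1: "cnj (ac 2 c 1) = ac 2 c 1" using ac_sym[of 1 2 c] by simp
  have p1: "cis t ^ 2 = w" by (simp add: w_def Complex.DeMoivre)
  have p2: "cis t ^ 4 = w^2" using p1 by (metis power_mult num_double numeral_times_numeral mult.commute)
  have p3: "cnj (cis t) ^ 2 = cnj w" using p1 by (metis complex_cnj_power)
  have "complex_of_real (form_eval 2 c (vx t)) = (ac 2 c 0 + ac 2 c 1 * cis t ^ 2 + ac 2 c 2 * cis t ^ 4) * cnj (cis t) ^ 2"
  proof -
    have sum3: "(\<Sum>j\<le>2. f j) = f 0 + f 1 + f (2::nat)" for f :: "nat \<Rightarrow> complex" by (simp add: numeral_2_eq_2)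
    show ?thesis unfolding trig_rep sum3 by simp
  qed
  also have "\<dots> = ac 2 c 0 * cnj w + ac 2 c 1 * (w * cnj w) + ac 2 c 2 * w * (w * cnj w)"
    by (simp only: p1 p2 p3) (simp add: algebra_simps power2_eq_square)
  also have "\<dots> = cnj (ac 2 c 2 * w) + ac 2 c 1 + ac 2 c 2 * w" by (simp add: ww a0)
  finally have "form_eval 2 c (vx t) = Re (cnj (ac 2 c 2 * w) + ac 2 c 1 + ac 2 c 2 * w)"
    by (metis Re_complex_of_real)
  thus ?thesis by (simp add: w_def)
qed

lemma d2_LB: "\<bar>Re (ac 2 c 1)\<bar> + 2 * cmod (ac 2 c 2) \<le> uniform_norm (form_eval 2 c)"
proof -
  define a2 where "a2 = ac 2 c 2"
  define r where "r = Re (ac 2 c 1)"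
  define \<phi> where "\<phi> = (if 0 \<le> r then 0 else pi)"
  define t where "t = (\<phi> - Arg a2) / 2"
  have tt: "2*t = \<phi> - Arg a2" by (simp add: t_def)
  have "a2 * cis (2*t) = complex_of_real (cmod a2) * (cis (Arg a2) * cis (\<phi> - Arg a2))"
    unfolding tt using rcis_cmod_Arg[of a2] by (simp add: rcis_def mult.assoc)
  also have "\<dots> = complex_of_real (cmod a2) * cis \<phi>" by (simp add: cis_mult)
  finally have "Re (a2 * cis (2*t)) = cmod a2 * cos \<phi>" by simp
  hence v: "form_eval 2 c (vx t) = r + 2 * (cmod a2 * cos \<phi>)" by (simp add: d2_val a2_def r_def)
  have "\<bar>r\<bar> + 2 * cmod a2 = \<bar>form_eval 2 c (vx t)\<bar>"
  proof -
    have m0: "0 \<le> cmod a2" by simp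
    show ?thesis unfolding v by (cases "0 \<le> r"; simp add: \<phi>_def; insert m0; arith)
  qed
  also have "\<dots> \<le> uniform_norm (form_eval 2 c)" by (rule U_ge[OF norm_vx])
  finally show ?thesis by (simp add: a2_def r_def)
qed

lemma d2_forward:
  assumes nz: "nonzero_form 2 c" and eq: "ratio 2 c = ratio 2 (cheb_coeff 2)"
  shows "Re (ac 2 c 1) = 0 \<or> ac 2 c 2 = 0"
proof -
  have d1: "(2::nat) \<ge> 1" by simp
  have eq': "ratio 2 c = 1 / sqrt (2^(2-1))" using eq cheb_ratio[OF d1] by simp
  have DD0: "\<forall>j\<le>2. DD 2 c j = 0" by (rule eq_DD(1)[OF d1 nz eq'])
  have UB: "2^(2-1) * (uniform_norm (form_eval 2 c))^2 = (bombieri_norm 2 c)^2" by (rule eq_DD(2)[OF d1 nz eq'])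
  have K: "(bombieri_norm 2 c)^2 + 2^(2-1) * (\<Sum>j\<le>2. DD 2 c j) = 2^(2-1) * ((\<Sum>j\<le>2. xx 2 c j) + 2 * xx 2 c 2)"
    by (rule key[OF d1])
  have S0: "(\<Sum>j\<le>2. DD 2 c j) = 0" using DD0 by simp
  have Sx: "(\<Sum>j\<le>(2::nat). xx 2 c j) = xx 2 c 0 + xx 2 c 1 + xx 2 c 2" by (simp add: numeral_2_eq_2)
  define U where "U = uniform_norm (form_eval 2 c)"
  define r where "r = Re (ac 2 c 1)"
  define m where "m = cmod (ac 2 c 2)"
  have a1: "cnj (ac 2 c 1) = ac 2 c 1" using ac_sym[of 1 2 c] by simp
  have "- Im (ac 2 c 1) = Im (ac 2 c 1)" using arg_cong[where f=Im, OF a1] by (simp only: cnj.sel)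
  hence im: "Im (ac 2 c 1) = 0" by linarith
  have x1: "xx 2 c 1 = r^2" unfolding xx_def r_def cmod_power2 im by simp
  have x2: "xx 2 c 2 = m^2" by (simp add: xx_def m_def)
  have U2: "U^2 = r^2 + 4 * m^2" using UB K S0 Sx xx0[of 2 c] x1 x2 by (simp add: U_def)
  have "\<bar>r\<bar> + 2 * m \<le> U" using d2_LB[of c] by (simp add: U_def r_def m_def)
  moreover have "0 \<le> \<bar>r\<bar> + 2 * m" by (simp add: m_def)
  ultimately have "(\<bar>r\<bar> + 2 * m)^2 \<le> U^2" by (rule power_mono)
  hence "\<bar>r\<bar> * m \<le> 0" using U2 by (simp add: power2_eq_square algebra_simps)
  moreover have "0 \<le> \<bar>r\<bar> * m" by (simp add: m_def)
  ultimately have "\<bar>r\<bar> * m = 0" by linarith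
  thus ?thesis by (auto simp: r_def m_def)
qed

lemma sq_norm2: "(y$1)^2 + (y$2)^2 = (norm (y::real^2))^2"
  by (simp add: norm2)

lemma sum3: "(\<Sum>j\<le>2. g j) = g 0 + g 1 + g (2::nat)" for g :: "nat \<Rightarrow> 'a::comm_monoid_add"
  by (simp add: numeral_2_eq_2)

lemma d2_circ:
  assumes e: "e \<noteq> 0" and f: "\<And>x. form_eval 2 c x = e * ((x$1)^2 + (x$2)^2)"
  shows "ratio 2 c = 1 / sqrt (2^(2-1))"
proof -
  have hc: "\<forall>k\<le>2. c k = (if k = 1 then 0 else e)"
    by (rule form_coeff_unique) (simp only: f, simp add: form_eval_def sum3 algebra_simps power2_eq_square)
  have c: "c 0 = e" "c (Suc 0) = 0" "c 2 = e"
    using hc[rule_format, of 0] hc[rule_format, of "Suc 0"] hc[rule_format, of 2] by simp_all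
  have "(\<Sum>k\<le>2. (c k)^2 / real (2 choose k)) = 2 * e^2" by (simp add: numeral_2_eq_2 c[unfolded numeral_2_eq_2])
  hence B: "bombieri_norm 2 c = sqrt 2 * \<bar>e\<bar>" by (simp add: bombieri_norm_def real_sqrt_mult)
  have U1: "uniform_norm (form_eval 2 c) \<le> \<bar>e\<bar>"
  proof (rule U_le)
    fix x :: "real^2" assume "norm x = 1"
    thus "\<bar>form_eval 2 c x\<bar> \<le> \<bar>e\<bar>" by (simp add: f sq_norm2)
  qed
  have "\<bar>e\<bar> \<le> uniform_norm (form_eval 2 c)" using U_ge[OF norm_vx, of 2 c 0] by (simp add: f vx_def)
  hence "uniform_norm (form_eval 2 c) = \<bar>e\<bar>" using U1 by simp
  thus ?thesis using e by (simp add: ratio_def B)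
qed

lemma d2_iff:
  assumes nz: "nonzero_form 2 c"
  shows "ratio 2 c = ratio 2 (cheb_coeff 2) \<longleftrightarrow>
          (\<exists>s \<rho>. in_CO2 s \<rho> \<and>
             (form_eval 2 c = co_action s \<rho> (\<lambda>x. (x$1)^2 + (x$2)^2)
              \<or> form_eval 2 c = (\<lambda>x. - co_action s \<rho> (\<lambda>x. (x$1)^2 + (x$2)^2) x)
              \<or> form_eval 2 c = co_action s \<rho> (\<lambda>x. (x$1)^2 - (x$2)^2)))"
proof
  assume eq: "ratio 2 c = ratio 2 (cheb_coeff 2)"
  from d2_forward[OF nz eq] show "\<exists>s \<rho>. in_CO2 s \<rho> \<and>
             (form_eval 2 c = co_action s \<rho> (\<lambda>x. (x$1)^2 + (x$2)^2)
              \<or> form_eval 2 c = (\<lambda>x. - co_action s \<rho> (\<lambda>x. (x$1)^2 + (x$2)^2) x)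
              \<or> form_eval 2 c = co_action s \<rho> (\<lambda>x. (x$1)^2 - (x$2)^2))"
  proof
    assume r0: "Re (ac 2 c 1) = 0"
    have a1: "cnj (ac 2 c 1) = ac 2 c 1" using ac_sym[of 1 2 c] by simp
    have "- Im (ac 2 c 1) = Im (ac 2 c 1)" using arg_cong[where f=Im, OF a1] by (simp only: cnj.sel)
    hence "Im (ac 2 c 1) = 0" by linarith
    hence a10: "ac 2 c 1 = 0" using r0 by (simp add: complex_eq_iff)
    have mid: "ac 2 c j = 0" if "0 < j" "j < 2" for j
    proof -
      have "j = 1" using that by simp
      thus ?thesis using a10 by simp
    qed
    have f: "form_eval 2 c = (\<lambda>x. Re (2 * ac 2 c 2 * zc x ^ 2))" using MZ[of 2 c, OF _ mid] by auto
    obtain s \<rho> where "in_CO2 s \<rho>" "(\<lambda>x. Re (2 * ac 2 c 2 * zc x ^ 2)) = co_action s \<rho> (form_eval 2 (cheb_coeff 2))"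
      using Re_to_co[of 2 "2 * ac 2 c 2"] MZ_nz[of 2 c, OF _ mid nz] by auto
    thus ?thesis using f cheb2 by metis
  next
    assume a20: "ac 2 c 2 = 0"
    define r where "r = Re (ac 2 c 1)"
    have a00: "ac 2 c 0 = 0" using ac_sym[of 2 2 c] a20 by simp
    have ck: "c k = r * Re (vc 2 1 k)" if "k \<le> 2" for k
    proof -
      have "cf c k = (\<Sum>j\<le>2. ac 2 c j * vc 2 j k)" by (rule A4[OF that])
      also have "\<dots> = ac 2 c 1 * vc 2 1 k" unfolding sum3 a00 a20 by simp
      finally have "cf c k = ac 2 c 1 * vc 2 1 k" .
      moreover have "Im (ac 2 c 1) = 0"
      proof -
        have a1: "cnj (ac 2 c 1) = ac 2 c 1" using ac_sym[of 1 2 c] by simp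
        have "- Im (ac 2 c 1) = Im (ac 2 c 1)" using arg_cong[where f=Im, OF a1] by (simp only: cnj.sel)
        thus ?thesis by linarith
      qed
      ultimately show ?thesis by (simp add: cf_def r_def complex_eq_iff)
    qed
    have c: "c 0 = r" "c (Suc 0) = 0" "c 2 = r" using ck[of 0] ck[of "Suc 0"] ck[of 2] by (simp_all add: vc21[simplified])
    have f: "form_eval 2 c = (\<lambda>x. r * ((x$1)^2 + (x$2)^2))"
      by (rule ext) (simp add: form_eval_def numeral_2_eq_2 c[unfolded numeral_2_eq_2] algebra_simps)
    have "r \<noteq> 0"
    proof
      assume "r = 0"
      moreover obtain k where "k \<le> 2" "c k \<noteq> 0" using nz by (auto simp: nonzero_form_def)
      ultimately show False using ck by simp
    qed
    have ca: "co_action s id g = (\<lambda>x. s * g x)" for s g by (simp add: co_action_def inv_id)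
    have oid: "orthogonal_transformation id" by (simp add: id_def)
    show ?thesis
    proof (cases "r > 0")
      case True
      hence "in_CO2 r id" using oid by (simp add: in_CO2_def)
      moreover have "form_eval 2 c = co_action r id (\<lambda>x. (x$1)^2 + (x$2)^2)" by (simp add: f ca)
      ultimately show ?thesis by blast
    next
      case False
      hence "in_CO2 (-r) id" using oid \<open>r \<noteq> 0\<close> by (simp add: in_CO2_def)
      moreover have "form_eval 2 c = (\<lambda>x. - co_action (-r) id (\<lambda>x. (x$1)^2 + (x$2)^2) x)"
        by (simp add: f ca)
      ultimately show ?thesis by blast
    qed
  qed
next
  assume "\<exists>s \<rho>. in_CO2 s \<rho> \<and>
             (form_eval 2 c = co_action s \<rho> (\<lambda>x. (x$1)^2 + (x$2)^2)
              \<or> form_eval 2 c = (\<lambda>x. - co_action s \<rho> (\<lambda>x. (x$1)^2 + (x$2)^2) x)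
              \<or> form_eval 2 c = co_action s \<rho> (\<lambda>x. (x$1)^2 - (x$2)^2))"
  then obtain s \<rho> where co: "in_CO2 s \<rho>" and
    h: "form_eval 2 c = co_action s \<rho> (\<lambda>x. (x$1)^2 + (x$2)^2)
              \<or> form_eval 2 c = (\<lambda>x. - co_action s \<rho> (\<lambda>x. (x$1)^2 + (x$2)^2) x)
              \<or> form_eval 2 c = co_action s \<rho> (\<lambda>x. (x$1)^2 - (x$2)^2)" by blast
  have s: "s > 0" and orth: "orthogonal_transformation \<rho>" using co by (auto simp: in_CO2_def)
  have inn: "norm (inv \<rho> x) = norm x" for x
    by (rule orthogonal_transformation_norm[OF orthogonal_transformation_inv[OF orth]])
  have circ: "co_action s \<rho> (\<lambda>x. (x$1)^2 + (x$2)^2) x = s * ((x$1)^2 + (x$2)^2)" for x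
    by (simp add: co_action_def sq_norm2 inn)
  have ch: "ratio 2 (cheb_coeff 2) = 1 / sqrt (2^(2-1))" by (rule cheb_ratio) simp
  from h show "ratio 2 c = ratio 2 (cheb_coeff 2)"
  proof (elim disjE)
    assume "form_eval 2 c = co_action s \<rho> (\<lambda>x. (x$1)^2 + (x$2)^2)"
    hence "form_eval 2 c x = s * ((x$1)^2 + (x$2)^2)" for x by (simp add: circ)
    thus ?thesis using d2_circ[of s c] s ch by simp
  next
    assume "form_eval 2 c = (\<lambda>x. - co_action s \<rho> (\<lambda>x. (x$1)^2 + (x$2)^2) x)"
    hence "form_eval 2 c x = (-s) * ((x$1)^2 + (x$2)^2)" for x by (simp add: circ)
    thus ?thesis using d2_circ[of "-s" c] s ch by simp
  next
    assume "form_eval 2 c = co_action s \<rho> (\<lambda>x. (x$1)^2 - (x$2)^2)"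
    hence "form_eval 2 c = co_action s \<rho> (form_eval 2 (cheb_coeff 2))" by (simp add: cheb2)
    from co_back[OF _ co this] show ?thesis by simp
  qed
qed

theorem theorem1p1:
  fixes d :: nat and c :: "nat \<Rightarrow> real"
  assumes "d \<ge> 1" and "nonzero_form d c"
  shows "ratio d c \<ge> ratio d (cheb_coeff d)
    \<and> ratio d (cheb_coeff d) = 1 / sqrt (2 ^ (d - 1))
    \<and> (d = 1 \<longrightarrow> ratio d c = ratio d (cheb_coeff d))
    \<and> (d = 2 \<longrightarrow> (ratio d c = ratio d (cheb_coeff d) \<longleftrightarrow>
          (\<exists>s \<rho>. in_CO2 s \<rho> \<and>
             (form_eval d c = co_action s \<rho> (\<lambda>x. (x$1)^2 + (x$2)^2)
              \<or> form_eval d c = (\<lambda>x. - co_action s \<rho> (\<lambda>x. (x$1)^2 + (x$2)^2) x)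
              \<or> form_eval d c = co_action s \<rho> (\<lambda>x. (x$1)^2 - (x$2)^2)))))
    \<and> (d \<ge> 3 \<longrightarrow> (ratio d c = ratio d (cheb_coeff d) \<longleftrightarrow>
          (\<exists>s \<rho>. in_CO2 s \<rho> \<and> form_eval d c = co_action s \<rho> (form_eval d (cheb_coeff d)))))"
proof (intro conjI impI)
  show ch: "ratio d (cheb_coeff d) = 1 / sqrt (2 ^ (d - 1))" by (rule cheb_ratio[OF assms(1)])
  show "ratio d c \<ge> ratio d (cheb_coeff d)" unfolding ch by (rule ratio_ge[OF assms])
  show "ratio d c = ratio d (cheb_coeff d)" if "d = 1" using d1_case assms(2) that by simp
  show "ratio d c = ratio d (cheb_coeff d) \<longleftrightarrow>
          (\<exists>s \<rho>. in_CO2 s \<rho> \<and>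
             (form_eval d c = co_action s \<rho> (\<lambda>x. (x$1)^2 + (x$2)^2)
              \<or> form_eval d c = (\<lambda>x. - co_action s \<rho> (\<lambda>x. (x$1)^2 + (x$2)^2) x)
              \<or> form_eval d c = co_action s \<rho> (\<lambda>x. (x$1)^2 - (x$2)^2)))" if "d = 2"
    using d2_iff assms(2) that by simp
  show "ratio d c = ratio d (cheb_coeff d) \<longleftrightarrow>
          (\<exists>s \<rho>. in_CO2 s \<rho> \<and> form_eval d c = co_action s \<rho> (form_eval d (cheb_coeff d)))" if d3: "d \<ge> 3"
  proof
    assume "ratio d c = ratio d (cheb_coeff d)"
    thus "\<exists>s \<rho>. in_CO2 s \<rho> \<and> form_eval d c = co_action s \<rho> (form_eval d (cheb_coeff d))"
      by (rule ge3_forward[OF d3 assms(2)])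
  next
    assume "\<exists>s \<rho>. in_CO2 s \<rho> \<and> form_eval d c = co_action s \<rho> (form_eval d (cheb_coeff d))"
    then obtain s \<rho> where "in_CO2 s \<rho>" "form_eval d c = co_action s \<rho> (form_eval d (cheb_coeff d))" by blast
    thus "ratio d c = ratio d (cheb_coeff d)" by (rule co_back[OF assms(1)])
  qed
qed

end
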